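(* Let $U,V$ be Hopf algebras with bijective antipodes, $\langle\,,\rangle:U\otimes V\to k$ a pairing, and let $\gamma:V\to U^{\rm cop}$ be a Hopf algebra map satisfying $\gamma(y)m=\langle S_U^{-1}(m_1),y_3\rangle\langle m_3,y_1\rangle\, m_2\gamma(y_2)$ for all $y\in V$, $m\in U$. Then: (i) The functional $\vartheta\in V^*$, $\vartheta(x)=\langle\gamma(x_1),S_V(x_2)\rangle$, is convolution invertible with inverse $\vartheta^{-1}(x)=\langle\gamma(S_V^2(x_1)),x_2\rangle$, and for all $x\in V$, $\gamma(S_V^2(x))=\vartheta^{-1}(x_1)\gamma(x_2)\vartheta(x_3)$. (ii) The functional $\upsilon\in V^*$, $\upsilon(x)=\langle\gamma(x_2),S_V(x_1)\rangle$, is convolution invertible with inverse $\upsilon^{-1}(x)=\langle\gamma(S_V^2(x_2)),x_1\rangle$, and for all $x\in V$, $\gamma(S_V^2(x))=\upsilon(x_1)\gamma(x_2)\upsilon^{-1}(x_3)$.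
   Context: Sweedler notation, subscripts referring to comultiplication in $U$ and $V$. A pairing satisfies $\langle mn,x\rangle=\langle m,x_1\rangle\langle n,x_2\rangle$, $\langle m,xy\rangle=\langle m_1,x\rangle\langle m_2,y\rangle$, $\langle 1,x\rangle=\varepsilon(x)$, $\langle m,1\rangle=\varepsilon(m)$. $U^{\rm cop}$ denotes $U$ with opposite comultiplication (antipode $S_U^{-1}$); products $\gamma(\cdot)\gamma(\cdot)$ are taken in $U$. *)

theory Defs
  imports Main
begin

text \<open>
Algebras over a field k are modelled as types of class ring_1 (so 0 is not 1)
together with a scalar action sm :: 'k => 'a => 'a.  The comultiplication
Delta(x) = sum_i a_i (x) b_i is represented by a finite list of pairs (a_i, b_i).
Equality of elements of A (x) A (resp. A (x) A (x) A) is tested against all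
products of linear functionals A -> k, which separate points of tensor products
of vector spaces over a field.
\<close>

definition k_algebra :: "('k::field \<Rightarrow> 'a::ring_1 \<Rightarrow> 'a) \<Rightarrow> bool" where
  "k_algebra sm \<longleftrightarrow>
     (\<forall>c x y. sm c (x + y) = sm c x + sm c y) \<and>
     (\<forall>c d x. sm (c + d) x = sm c x + sm d x) \<and>
     (\<forall>c d x. sm (c * d) x = sm c (sm d x)) \<and>
     (\<forall>x. sm 1 x = x) \<and>
     (\<forall>c x y. sm c (x * y) = sm c x * y) \<and>
     (\<forall>c x y. sm c (x * y) = x * sm c y)"

definition lin_map :: "('k::field \<Rightarrow> 'a::ring_1 \<Rightarrow> 'a) \<Rightarrow> ('k \<Rightarrow> 'b::ring_1 \<Rightarrow> 'b) \<Rightarrow> ('a \<Rightarrow> 'b) \<Rightarrow> bool" where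
  "lin_map sa sb f \<longleftrightarrow> (\<forall>x y. f (x + y) = f x + f y) \<and> (\<forall>c x. f (sa c x) = sb c (f x))"

definition lin_fun :: "('k::field \<Rightarrow> 'a::ring_1 \<Rightarrow> 'a) \<Rightarrow> ('a \<Rightarrow> 'k) \<Rightarrow> bool" where
  "lin_fun sa f \<longleftrightarrow> (\<forall>x y. f (x + y) = f x + f y) \<and> (\<forall>c x. f (sa c x) = c * f x)"

definition tensor2_eq :: "('k::field \<Rightarrow> 'a::ring_1 \<Rightarrow> 'a) \<Rightarrow> ('a \<times> 'a) list \<Rightarrow> ('a \<times> 'a) list \<Rightarrow> bool" where
  "tensor2_eq sa L1 L2 \<longleftrightarrow> (\<forall>f g. lin_fun sa f \<longrightarrow> lin_fun sa g \<longrightarrow>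
      sum_list (map (\<lambda>(a, b). f a * g b) L1) = sum_list (map (\<lambda>(a, b). f a * g b) L2))"

definition tensor3_eq :: "('k::field \<Rightarrow> 'a::ring_1 \<Rightarrow> 'a) \<Rightarrow> ('a \<times> 'a \<times> 'a) list \<Rightarrow> ('a \<times> 'a \<times> 'a) list \<Rightarrow> bool" where
  "tensor3_eq sa L1 L2 \<longleftrightarrow> (\<forall>f g h. lin_fun sa f \<longrightarrow> lin_fun sa g \<longrightarrow> lin_fun sa h \<longrightarrow>
      sum_list (map (\<lambda>(a, b, c). f a * g b * h c) L1) = sum_list (map (\<lambda>(a, b, c). f a * g b * h c) L2))"

text \<open>(id (x) Delta) Delta, i.e. Sweedler x_1 (x) x_2 (x) x_3.\<close>
definition delta3 :: "('a \<Rightarrow> ('a \<times> 'a) list) \<Rightarrow> 'a \<Rightarrow> ('a \<times> 'a \<times> 'a) list" where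
  "delta3 \<Delta> x = concat (map (\<lambda>(a, b). map (\<lambda>(c, d). (a, c, d)) (\<Delta> b)) (\<Delta> x))"

definition delta3' :: "('a \<Rightarrow> ('a \<times> 'a) list) \<Rightarrow> 'a \<Rightarrow> ('a \<times> 'a \<times> 'a) list" where
  "delta3' \<Delta> x = concat (map (\<lambda>(a, b). map (\<lambda>(c, d). (c, d, b)) (\<Delta> a)) (\<Delta> x))"

definition hopf_algebra ::
  "('k::field \<Rightarrow> 'a::ring_1 \<Rightarrow> 'a) \<Rightarrow> ('a \<Rightarrow> ('a \<times> 'a) list) \<Rightarrow> ('a \<Rightarrow> 'k) \<Rightarrow> ('a \<Rightarrow> 'a) \<Rightarrow> bool" where
  "hopf_algebra sm \<Delta> \<epsilon> S \<longleftrightarrow>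
     k_algebra sm \<and>
     \<comment> \<open>comultiplication is linear\<close>
     (\<forall>x y. tensor2_eq sm (\<Delta> (x + y)) (\<Delta> x @ \<Delta> y)) \<and>
     (\<forall>c x. tensor2_eq sm (\<Delta> (sm c x)) (map (\<lambda>(a, b). (sm c a, b)) (\<Delta> x))) \<and>
     \<comment> \<open>coassociativity\<close>
     (\<forall>x. tensor3_eq sm (delta3 \<Delta> x) (delta3' \<Delta> x)) \<and>
     \<comment> \<open>counit\<close>
     lin_fun sm \<epsilon> \<and>
     (\<forall>x. sum_list (map (\<lambda>(a, b). sm (\<epsilon> a) b) (\<Delta> x)) = x) \<and>
     (\<forall>x. sum_list (map (\<lambda>(a, b). sm (\<epsilon> b) a) (\<Delta> x)) = x) \<and>
     \<comment> \<open>Delta and epsilon are algebra maps\<close>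
     (\<forall>x y. tensor2_eq sm (\<Delta> (x * y)) (concat (map (\<lambda>(a, b). map (\<lambda>(c, d). (a * c, b * d)) (\<Delta> y)) (\<Delta> x)))) \<and>
     tensor2_eq sm (\<Delta> 1) [(1, 1)] \<and>
     (\<forall>x y. \<epsilon> (x * y) = \<epsilon> x * \<epsilon> y) \<and> \<epsilon> 1 = 1 \<and>
     \<comment> \<open>antipode\<close>
     lin_map sm sm S \<and>
     (\<forall>x. sum_list (map (\<lambda>(a, b). S a * b) (\<Delta> x)) = sm (\<epsilon> x) 1) \<and>
     (\<forall>x. sum_list (map (\<lambda>(a, b). a * S b) (\<Delta> x)) = sm (\<epsilon> x) 1)"

definition hopf_pairing ::
  "('k::field \<Rightarrow> 'u::ring_1 \<Rightarrow> 'u) \<Rightarrow> ('u \<Rightarrow> ('u \<times> 'u) list) \<Rightarrow> ('u \<Rightarrow> 'k) \<Rightarrow>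
   ('k \<Rightarrow> 'v::ring_1 \<Rightarrow> 'v) \<Rightarrow> ('v \<Rightarrow> ('v \<times> 'v) list) \<Rightarrow> ('v \<Rightarrow> 'k) \<Rightarrow>
   ('u \<Rightarrow> 'v \<Rightarrow> 'k) \<Rightarrow> bool" where
  "hopf_pairing smU \<Delta>U \<epsilon>U smV \<Delta>V \<epsilon>V p \<longleftrightarrow>
     (\<forall>x. lin_fun smU (\<lambda>m. p m x)) \<and> (\<forall>m. lin_fun smV (\<lambda>x. p m x)) \<and>
     (\<forall>m n x. p (m * n) x = sum_list (map (\<lambda>(a, b). p m a * p n b) (\<Delta>V x))) \<and>
     (\<forall>m x y. p m (x * y) = sum_list (map (\<lambda>(a, b). p a x * p b y) (\<Delta>U m))) \<and>
     (\<forall>x. p 1 x = \<epsilon>V x) \<and> (\<forall>m. p m 1 = \<epsilon>U m)"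

text \<open>Hopf algebra map V -> U^cop (bialgebra map; compatibility with antipodes is automatic).\<close>
definition hopf_map_cop ::
  "('k::field \<Rightarrow> 'u::ring_1 \<Rightarrow> 'u) \<Rightarrow> ('u \<Rightarrow> ('u \<times> 'u) list) \<Rightarrow> ('u \<Rightarrow> 'k) \<Rightarrow>
   ('k \<Rightarrow> 'v::ring_1 \<Rightarrow> 'v) \<Rightarrow> ('v \<Rightarrow> ('v \<times> 'v) list) \<Rightarrow> ('v \<Rightarrow> 'k) \<Rightarrow>
   ('v \<Rightarrow> 'u) \<Rightarrow> bool" where
  "hopf_map_cop smU \<Delta>U \<epsilon>U smV \<Delta>V \<epsilon>V \<gamma> \<longleftrightarrow>
     lin_map smV smU \<gamma> \<and>
     (\<forall>x y. \<gamma> (x * y) = \<gamma> x * \<gamma> y) \<and> \<gamma> 1 = 1 \<and>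
     (\<forall>y. tensor2_eq smU (\<Delta>U (\<gamma> y)) (map (\<lambda>(a, b). (\<gamma> b, \<gamma> a)) (\<Delta>V y))) \<and>
     (\<forall>y. \<epsilon>U (\<gamma> y) = \<epsilon>V y)"

definition conv :: "('a \<Rightarrow> ('a \<times> 'a) list) \<Rightarrow> ('a \<Rightarrow> 'k::field) \<Rightarrow> ('a \<Rightarrow> 'k) \<Rightarrow> 'a \<Rightarrow> 'k" where
  "conv \<Delta> f g x = sum_list (map (\<lambda>(a, b). f a * g b) (\<Delta> x))"

end

theory Submission
  imports Defs "HOL.Vector_Spaces"
begin


section \<open>Basic linear algebra\<close>

lemma lin_funD1: "lin_fun sm f \<Longrightarrow> f (x + y) = f x + f y"
  by (simp add: lin_fun_def)
lemma lin_funD2: "lin_fun sm f \<Longrightarrow> f (sm c x) = c * f x"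
  by (simp add: lin_fun_def)
lemma lin_fun_zero: assumes "lin_fun sm f" shows "f 0 = 0"
proof -
  have "f 0 + f 0 = f 0 + 0" using lin_funD1[OF assms, of 0 0] by simp
  then show ?thesis by (rule add_left_imp_eq)
qed
lemma lin_fun_minus: assumes "lin_fun sm f" shows "f (- x) = - f x"
proof -
  have "f (- x) + f x = 0" using lin_funD1[OF assms, of "- x" x] lin_fun_zero[OF assms] by simp
  then show ?thesis by (simp add: eq_neg_iff_add_eq_0)
qed
lemma lin_fun_diff: "lin_fun sm f \<Longrightarrow> f (x - y) = f x - f y"
  using lin_funD1[of sm f x "- y"] lin_fun_minus[of sm f y] by simp
lemma lin_fun_sum_list: "lin_fun sm f \<Longrightarrow> f (sum_list (map g L)) = sum_list (map (\<lambda>x. f (g x)) L)"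
  by (induction L) (auto simp: lin_fun_zero lin_funD1)

lemma lin_mapD1: "lin_map sa sb f \<Longrightarrow> f (x + y) = f x + f y"
  by (simp add: lin_map_def)
lemma lin_mapD2: "lin_map sa sb f \<Longrightarrow> f (sa c x) = sb c (f x)"
  by (simp add: lin_map_def)
lemma lin_map_zero: assumes "lin_map sa sb f" shows "f 0 = 0"
proof -
  have "f 0 + f 0 = f 0 + 0" using lin_mapD1[OF assms, of 0 0] by simp
  then show ?thesis by (rule add_left_imp_eq)
qed
lemma lin_map_minus: assumes "lin_map sa sb f" shows "f (- x) = - f x"
proof -
  have "f (- x) + f x = 0" using lin_mapD1[OF assms, of "- x" x] lin_map_zero[OF assms] by simp
  then show ?thesis by (simp add: eq_neg_iff_add_eq_0)
qed
lemma lin_map_diff: "lin_map sa sb f \<Longrightarrow> f (x - y) = f x - f y"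
  using lin_mapD1[of sa sb f x "- y"] lin_map_minus[of sa sb f y] by simp
lemma lin_map_sum_list: "lin_map sa sb f \<Longrightarrow> f (sum_list (map g L)) = sum_list (map (\<lambda>x. f (g x)) L)"
  by (induction L) (auto simp: lin_map_zero lin_mapD1)

lemma lin_fun_comp: "lin_map sa sb g \<Longrightarrow> lin_fun sb f \<Longrightarrow> lin_fun sa (\<lambda>x. f (g x))"
  by (simp add: lin_fun_def lin_map_def)

locale kalg =
  fixes sm :: "'k::field \<Rightarrow> 'a::ring_1 \<Rightarrow> 'a"
  assumes kalg: "k_algebra sm"
begin

lemma sm_add: "sm c (x + y) = sm c x + sm c y"
  using kalg by (simp add: k_algebra_def)
lemma sm_add_left: "sm (c + d) x = sm c x + sm d x"
  using kalg by (simp add: k_algebra_def)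
lemma sm_sm: "sm c (sm d x) = sm (c * d) x"
  using kalg by (simp add: k_algebra_def)
lemma sm_one[simp]: "sm 1 x = x"
  using kalg by (simp add: k_algebra_def)
lemma sm_mult_left: "sm c x * y = sm c (x * y)"
  using kalg unfolding k_algebra_def by metis
lemma sm_mult_right: "x * sm c y = sm c (x * y)"
  using kalg unfolding k_algebra_def by metis

sublocale vs: vector_space sm
  by unfold_locales (simp_all add: sm_add sm_add_left sm_sm)

lemma sm_zero[simp]: "sm c 0 = 0" by (rule vs.scale_zero_right)
lemma sm_zero_left[simp]: "sm 0 x = 0" by (rule vs.scale_zero_left)
lemma sm_minus: "sm c (- x) = - sm c x" by (rule vs.scale_minus_right)
lemma sm_minus_left: "sm (- c) x = - sm c x" by (rule vs.scale_minus_left)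
lemma sm_diff: "sm c (x - y) = sm c x - sm c y" by (rule vs.scale_right_diff_distrib)
lemma sm_diff_left: "sm (c - d) x = sm c x - sm d x" by (rule vs.scale_left_diff_distrib)
lemma sm_sum_list: "sm c (sum_list (map g L)) = sum_list (map (\<lambda>x. sm c (g x)) L)"
  by (induction L) (auto simp: sm_add)

lemma exists_fun: assumes "a \<noteq> 0" shows "\<exists>f. lin_fun sm f \<and> f a = 1"
proof -
  interpret k: vector_space "(*) :: 'k \<Rightarrow> 'k \<Rightarrow> 'k"
    by unfold_locales (simp_all add: algebra_simps)
  interpret vp: vector_space_pair sm "(*) :: 'k \<Rightarrow> 'k \<Rightarrow> 'k" ..
  have "vs.independent {a}" using assms by simp
  from vp.linear_independent_extend[OF this, of "\<lambda>_. 1"]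
  obtain g where g: "Vector_Spaces.linear sm (*) g" "g a = 1" by auto
  have "lin_fun sm g" using g(1) unfolding Vector_Spaces.linear_iff lin_fun_def by auto
  with g(2) show ?thesis by blast
qed

lemma sep: assumes "\<And>f. lin_fun sm f \<Longrightarrow> f u = f v" shows "u = v"
proof (rule ccontr)
  assume "u \<noteq> v"
  then have "u - v \<noteq> 0" by simp
  from exists_fun[OF this] obtain f where f: "lin_fun sm f" "f (u - v) = 1" by auto
  with assms[OF f(1)] show False by (simp add: lin_fun_diff)
qed

end


lemma sum_list_neg: fixes f :: "'b \<Rightarrow> 'a::ab_group_add"
  shows "sum_list (map (\<lambda>x. - f x) xs) = - sum_list (map f xs)"
  by (induction xs) auto

lemma sum_list_cong: "(\<And>x. x \<in> set xs \<Longrightarrow> f x = g x) \<Longrightarrow> sum_list (map f xs) = sum_list (map g xs)"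
  by (metis map_cong)

lemma aux_cancel: fixes a b c X Y :: "'k::field"
  assumes "a + X = 0" "b + Y = 0" "a = c * b" shows "X - c * Y = 0"
proof -
  have "X = (a + X) - a" "Y = (b + Y) - b" by simp_all
  then have "X = - a" "Y = - b" using assms(1,2) by simp_all
  then show ?thesis using assms(3) by simp
qed

context kalg begin

lemma gen_T_aux:
  fixes L :: "('k \<times> 'a \<times> 'r) list" and PP QQ :: "('r \<Rightarrow> 'k) set" and B :: "'a \<Rightarrow> 'r \<Rightarrow> 'k"
  assumes H: "\<And>cs Q. (\<forall>P\<in>PP. sum_list (map (\<lambda>(c,r). c * P r) cs) = 0) \<Longrightarrow> Q \<in> QQ \<Longrightarrow>
                 sum_list (map (\<lambda>(c,r). c * Q r) cs) = 0"
    and Blin: "\<And>r. lin_fun sm (\<lambda>a. B a r)" and BQ: "\<And>a. (\<lambda>r. B a r) \<in> QQ"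
  shows "(\<forall>f P. lin_fun sm f \<longrightarrow> P \<in> PP \<longrightarrow> sum_list (map (\<lambda>(c,a,r). c * f a * P r) L) = 0) \<longrightarrow>
         sum_list (map (\<lambda>(c,a,r). c * B a r) L) = 0"
proof (induction L rule: length_induct)
  case (1 L)
  show ?case
  proof (cases L)
    case Nil then show ?thesis by simp
  next
    case (Cons h rest)
    obtain c0 a0 r0 where h: "h = (c0,a0,r0)" by (cases h) auto
    show ?thesis
    proof (intro impI)
      assume hyp: "\<forall>f P. lin_fun sm f \<longrightarrow> P \<in> PP \<longrightarrow> sum_list (map (\<lambda>(c,a,r). c * f a * P r) L) = 0"
      show "sum_list (map (\<lambda>(c,a,r). c * B a r) L) = 0"
      proof (cases "a0 = 0")
        case True
        have "sum_list (map (\<lambda>(c,a,r). c * f a * P r) rest) = 0" if "lin_fun sm f" "P \<in> PP" for f P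
          using hyp that Cons h True by (simp add: lin_fun_zero)
        then have "sum_list (map (\<lambda>(c,a,r). c * B a r) rest) = 0"
          using "1.IH" Cons by auto
        then show ?thesis using Cons h True lin_fun_zero[OF Blin] by simp
      next
        case False
        from exists_fun[OF False] obtain f0 where f0: "lin_fun sm f0" "f0 a0 = 1" by auto
        define rest' where "rest' = map (\<lambda>(c,a,r). (c, a - sm (f0 a) a0, r)) rest"
        have len: "length rest' < length L" using Cons by (simp add: rest'_def)
        have "sum_list (map (\<lambda>(c,a,r). c * f a * P r) rest') = 0" if f: "lin_fun sm f" and P: "P \<in> PP" for f P
        proof -
          have "sum_list (map (\<lambda>(c,a,r). c * f a * P r) rest') =
                sum_list (map (\<lambda>x. (\<lambda>(c,a,r). c * f a * P r) x - f a0 * (\<lambda>(c,a,r). c * f0 a * P r) x) rest)"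
            unfolding rest'_def by (auto intro!: sum_list_cong simp: lin_fun_diff[OF f] lin_funD2[OF f] algebra_simps)
          also have "\<dots> = sum_list (map (\<lambda>(c,a,r). c * f a * P r) rest) - f a0 * sum_list (map (\<lambda>(c,a,r). c * f0 a * P r) rest)"
            by (simp add: sum_list_subtractf sum_list_const_mult)
          also have "\<dots> = 0"
          proof -
            have e1: "c0 * f a0 * P r0 + sum_list (map (\<lambda>(c,a,r). c * f a * P r) rest) = 0"
              using hyp f P Cons h by simp
            have e2: "c0 * P r0 + sum_list (map (\<lambda>(c,a,r). c * f0 a * P r) rest) = 0"
            proof -
              have "c0 * f0 a0 * P r0 + sum_list (map (\<lambda>(c,a,r). c * f0 a * P r) rest) = 0"
                using hyp f0(1) P Cons h by simp
              then show ?thesis using f0(2) by simp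
            qed
            show ?thesis by (rule aux_cancel[OF e1 e2]) simp
          qed
          finally show ?thesis .
        qed
        then have "sum_list (map (\<lambda>(c,a,r). c * B a r) rest') = 0"
          using "1.IH" len by blast
        moreover have "sum_list (map (\<lambda>(c,a,r). c * B a r) rest') =
             sum_list (map (\<lambda>(c,a,r). c * B a r) rest) - sum_list (map (\<lambda>(c,a,r). c * f0 a * B a0 r) rest)"
          unfolding rest'_def sum_list_subtractf[symmetric]
          by (auto intro!: sum_list_cong simp: lin_fun_diff[OF Blin] lin_funD2[OF Blin] algebra_simps)
        ultimately have e3: "sum_list (map (\<lambda>(c,a,r). c * B a r) rest) = sum_list (map (\<lambda>(c,a,r). c * f0 a * B a0 r) rest)"
          by simp
        have "sum_list (map (\<lambda>(c,r). c * B a0 r) (map (\<lambda>(c,a,r). (c * f0 a, r)) L)) = 0"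
        proof (rule H[OF _ BQ])
          show "\<forall>P\<in>PP. sum_list (map (\<lambda>(c,r). c * P r) (map (\<lambda>(c,a,r). (c * f0 a, r)) L)) = 0"
          proof
            fix P assume "P \<in> PP"
            then have "sum_list (map (\<lambda>(c,a,r). c * f0 a * P r) L) = 0" using hyp f0 by blast
            then show "sum_list (map (\<lambda>(c,r). c * P r) (map (\<lambda>(c,a,r). (c * f0 a, r)) L)) = 0"
              by (simp add: case_prod_unfold comp_def)
          qed
        qed
        then have "c0 * B a0 r0 + sum_list (map (\<lambda>(c,a,r). c * f0 a * B a0 r) rest) = 0"
          using Cons h f0 by (simp add: case_prod_unfold comp_def)
        then show ?thesis using Cons h e3 by simp
      qed
    qed
  qed
qed

end


context kalg begin

lemma T2w:
  fixes L :: "('k \<times> 'a \<times> 'a) list"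
  assumes hyp: "\<And>f g. lin_fun sm f \<Longrightarrow> lin_fun sm g \<Longrightarrow> sum_list (map (\<lambda>(c,a,b). c * f a * g b) L) = 0"
    and B1: "\<And>b. lin_fun sm (\<lambda>a. B a b)" and B2: "\<And>a. lin_fun sm (\<lambda>b. B a b)"
  shows "sum_list (map (\<lambda>(c,a,b). c * B a b) L) = 0"
  using gen_T_aux[of "{g. lin_fun sm g}" "{g. lin_fun sm g}" B L] hyp B1 B2 by auto

lemma T2:
  assumes "tensor2_eq sm L1 L2"
    and B1: "\<And>b. lin_fun sm (\<lambda>a. B a b)" and B2: "\<And>a. lin_fun sm (\<lambda>b. B a b)"
  shows "sum_list (map (\<lambda>(a,b). B a b) L1) = sum_list (map (\<lambda>(a,b). B a b) L2)"
proof -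
  define L where "L = map (\<lambda>(a,b). (1::'k,a,b)) L1 @ map (\<lambda>(a,b). (-1,a,b)) L2"
  have gen: "sum_list (map (\<lambda>(c,a,b). c * F a b) L) =
      sum_list (map (\<lambda>(a,b). F a b) L1) - sum_list (map (\<lambda>(a,b). F a b) L2)" for F
    unfolding L_def by (simp add: case_prod_unfold comp_def sum_list_neg)
  have "sum_list (map (\<lambda>(c,a,b). c * B a b) L) = 0"
  proof (rule T2w[OF _ B1 B2])
    fix f g assume "lin_fun sm f" "lin_fun sm g"
    then show "sum_list (map (\<lambda>(c,a,b). c * f a * g b) L) = 0"
      using assms(1) gen[of "\<lambda>a b. f a * g b"] unfolding tensor2_eq_def by (simp add: mult.assoc)
  qed
  then show ?thesis using gen[of B] by simp
qed

lemma T3w: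
  fixes L :: "('k \<times> 'a \<times> 'a \<times> 'a) list"
  assumes hyp: "\<And>f g h. lin_fun sm f \<Longrightarrow> lin_fun sm g \<Longrightarrow> lin_fun sm h \<Longrightarrow>
        sum_list (map (\<lambda>(c,a,b,d). c * f a * g b * h d) L) = 0"
    and B1: "\<And>b d. lin_fun sm (\<lambda>a. B a b d)" and B2: "\<And>a d. lin_fun sm (\<lambda>b. B a b d)"
    and B3: "\<And>a b. lin_fun sm (\<lambda>d. B a b d)"
  shows "sum_list (map (\<lambda>(c,a,b,d). c * B a b d) L) = 0"
proof -
  let ?PP = "{P. \<exists>g h. lin_fun sm g \<and> lin_fun sm h \<and> P = (\<lambda>(b,d). g b * h d)}"
  let ?QQ = "{Q. \<exists>B'. (\<forall>d. lin_fun sm (\<lambda>b. B' b d)) \<and> (\<forall>b. lin_fun sm (\<lambda>d. B' b d)) \<and> Q = (\<lambda>(b,d). B' b d)}"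
  have H: "sum_list (map (\<lambda>(c,r). c * Q r) cs) = 0"
    if hP: "\<forall>P\<in>?PP. sum_list (map (\<lambda>(c,r). c * P r) cs) = 0" and hQ: "Q \<in> ?QQ" for cs :: "('k \<times> 'a \<times> 'a) list" and Q
  proof -
    obtain B' where B': "\<And>d. lin_fun sm (\<lambda>b. B' b d)" "\<And>b. lin_fun sm (\<lambda>d. B' b d)" "Q = (\<lambda>(b,d). B' b d)"
      using hQ by auto
    have "sum_list (map (\<lambda>(c,a,b). c * B' a b) cs) = 0"
    proof (rule T2w[OF _ B'(1,2)])
      fix g h assume gh: "lin_fun sm g" "lin_fun sm h"
      then have "(\<lambda>(b,d). g b * h d) \<in> ?PP" by blast
      then have "sum_list (map (\<lambda>(c,r). c * (\<lambda>(b,d). g b * h d) r) cs) = 0" using hP by blast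
      then show "sum_list (map (\<lambda>(c,a,b). c * g a * h b) cs) = 0"
        by (simp add: case_prod_unfold mult.assoc)
    qed
    then show ?thesis using B'(3) by (simp add: case_prod_unfold)
  qed
  have "(\<forall>f P. lin_fun sm f \<longrightarrow> P \<in> ?PP \<longrightarrow> sum_list (map (\<lambda>(c,a,r). c * f a * P r) L) = 0) \<longrightarrow>
         sum_list (map (\<lambda>(c,a,r). c * (\<lambda>a (b,d). B a b d) a r) L) = 0"
  proof (rule gen_T_aux[of ?PP ?QQ])
    show "\<And>cs Q. \<forall>P\<in>?PP. sum_list (map (\<lambda>(c,r). c * P r) cs) = 0 \<Longrightarrow> Q \<in> ?QQ \<Longrightarrow>
              sum_list (map (\<lambda>(c,r). c * Q r) cs) = 0" using H by blast
    show "\<And>r. lin_fun sm (\<lambda>a. (\<lambda>a (b,d). B a b d) a r)" using B1 by (simp add: case_prod_unfold)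
    show "\<And>a. (\<lambda>(b,d). B a b d) \<in> ?QQ" using B2 B3 by blast
  qed
  moreover have "\<forall>f P. lin_fun sm f \<longrightarrow> P \<in> ?PP \<longrightarrow> sum_list (map (\<lambda>(c,a,r). c * f a * P r) L) = 0"
  proof (intro allI impI)
    fix f P assume f: "lin_fun sm f" and "P \<in> ?PP"
    then obtain g h where gh: "lin_fun sm g" "lin_fun sm h" "P = (\<lambda>(b,d). g b * h d)" by auto
    show "sum_list (map (\<lambda>(c,a,r). c * f a * P r) L) = 0"
      using hyp[OF f gh(1,2)] gh(3) by (simp add: case_prod_unfold mult.assoc)
  qed
  ultimately show ?thesis by (simp add: case_prod_unfold)
qed

lemma T3:
  assumes "tensor3_eq sm L1 L2"
    and B1: "\<And>b d. lin_fun sm (\<lambda>a. B a b d)" and B2: "\<And>a d. lin_fun sm (\<lambda>b. B a b d)"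
    and B3: "\<And>a b. lin_fun sm (\<lambda>d. B a b d)"
  shows "sum_list (map (\<lambda>(a,b,d). B a b d) L1) = sum_list (map (\<lambda>(a,b,d). B a b d) L2)"
proof -
  define L where "L = map (\<lambda>(a,b,d). (1::'k,a,b,d)) L1 @ map (\<lambda>(a,b,d). (-1,a,b,d)) L2"
  have gen: "sum_list (map (\<lambda>(c,a,b,d). c * F a b d) L) =
      sum_list (map (\<lambda>(a,b,d). F a b d) L1) - sum_list (map (\<lambda>(a,b,d). F a b d) L2)" for F
    unfolding L_def by (simp add: case_prod_unfold comp_def sum_list_neg)
  have "sum_list (map (\<lambda>(c,a,b,d). c * B a b d) L) = 0"
  proof (rule T3w[OF _ B1 B2 B3])
    fix f g h assume "lin_fun sm f" "lin_fun sm g" "lin_fun sm h"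
    then show "sum_list (map (\<lambda>(c,a,b,d). c * f a * g b * h d) L) = 0"
      using assms(1) gen[of "\<lambda>a b d. f a * g b * h d"] unfolding tensor3_eq_def by (simp add: mult.assoc)
  qed
  then show ?thesis using gen[of B] by simp
qed

end




definition bil :: "('k::field \<Rightarrow> 'a::ring_1 \<Rightarrow> 'a) \<Rightarrow> ('a \<Rightarrow> 'a \<Rightarrow> 'k) \<Rightarrow> bool" where
  "bil sm B \<longleftrightarrow> (\<forall>b. lin_fun sm (\<lambda>a. B a b)) \<and> (\<forall>a. lin_fun sm (\<lambda>b. B a b))"

definition tril :: "('k::field \<Rightarrow> 'a::ring_1 \<Rightarrow> 'a) \<Rightarrow> ('a \<Rightarrow> 'a \<Rightarrow> 'a \<Rightarrow> 'k) \<Rightarrow> bool" where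
  "tril sm B \<longleftrightarrow> (\<forall>b c. lin_fun sm (\<lambda>a. B a b c)) \<and> (\<forall>a c. lin_fun sm (\<lambda>b. B a b c)) \<and> (\<forall>a b. lin_fun sm (\<lambda>c. B a b c))"

lemma bil_D:
  assumes "bil sm B"
  shows "B (x + y) b = B x b + B y b" "B (sm c x) b = c * B x b"
    "B a (x + y) = B a x + B a y" "B a (sm c x) = c * B a x"
  using assms unfolding bil_def lin_fun_def by simp_all

lemma sum_list_concat_map: "sum_list (map f (concat xs)) = sum_list (map (\<lambda>x. sum_list (map f x)) xs)"
  by (induction xs) auto

lemma lin_fun_add: "lin_fun sm f \<Longrightarrow> lin_fun sm g \<Longrightarrow> lin_fun sm (\<lambda>x. f x + g x)"
  by (simp add: lin_fun_def algebra_simps)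
lemma lin_fun_cmult: "lin_fun sm f \<Longrightarrow> lin_fun sm (\<lambda>x. c * f x)"
  by (simp add: lin_fun_def algebra_simps)
lemma lin_fun_multc: "lin_fun sm f \<Longrightarrow> lin_fun sm (\<lambda>x. f x * c)"
  by (simp add: lin_fun_def algebra_simps)
lemma lin_fun_0: "lin_fun sm (\<lambda>x. 0)"
  by (simp add: lin_fun_def)
lemma lin_fun_sum_listI: "(\<And>y. y \<in> set L \<Longrightarrow> lin_fun sm (\<lambda>x. G x y)) \<Longrightarrow> lin_fun sm (\<lambda>x. sum_list (map (G x) L))"
  by (induction L) (auto intro: lin_fun_add lin_fun_0)

locale hopf =
  fixes sm :: "'k::field \<Rightarrow> 'a::ring_1 \<Rightarrow> 'a" and \<Delta> :: "'a \<Rightarrow> ('a \<times> 'a) list"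
    and \<epsilon> :: "'a \<Rightarrow> 'k" and S :: "'a \<Rightarrow> 'a"
  assumes hopf: "hopf_algebra sm \<Delta> \<epsilon> S"
begin

sublocale kalg sm using hopf by (unfold_locales) (simp add: hopf_algebra_def)

lemma D_add: "tensor2_eq sm (\<Delta> (x + y)) (\<Delta> x @ \<Delta> y)" using hopf by (simp add: hopf_algebra_def)
lemma D_sm: "tensor2_eq sm (\<Delta> (sm c x)) (map (\<lambda>(a, b). (sm c a, b)) (\<Delta> x))" using hopf by (simp add: hopf_algebra_def)
lemma coassoc: "tensor3_eq sm (delta3 \<Delta> x) (delta3' \<Delta> x)" using hopf by (simp add: hopf_algebra_def)
lemma eps_lin: "lin_fun sm \<epsilon>" using hopf by (simp add: hopf_algebra_def)
lemma counitL: "sum_list (map (\<lambda>(a, b). sm (\<epsilon> a) b) (\<Delta> x)) = x" using hopf by (simp add: hopf_algebra_def)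
lemma counitR: "sum_list (map (\<lambda>(a, b). sm (\<epsilon> b) a) (\<Delta> x)) = x" using hopf by (simp add: hopf_algebra_def)
lemma D_mult: "tensor2_eq sm (\<Delta> (x * y)) (concat (map (\<lambda>(a, b). map (\<lambda>(c, d). (a * c, b * d)) (\<Delta> y)) (\<Delta> x)))"
  using hopf by (simp add: hopf_algebra_def)
lemma D_one: "tensor2_eq sm (\<Delta> 1) [(1, 1)]" using hopf by (simp add: hopf_algebra_def)
lemma eps_mult: "\<epsilon> (x * y) = \<epsilon> x * \<epsilon> y" using hopf by (simp add: hopf_algebra_def)
lemma eps_one: "\<epsilon> 1 = 1" using hopf by (simp add: hopf_algebra_def)
lemma S_lin: "lin_map sm sm S" using hopf by (simp add: hopf_algebra_def)
lemma antipL: "sum_list (map (\<lambda>(a, b). S a * b) (\<Delta> x)) = sm (\<epsilon> x) 1" using hopf by (simp add: hopf_algebra_def)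
lemma antipR: "sum_list (map (\<lambda>(a, b). a * S b) (\<Delta> x)) = sm (\<epsilon> x) 1" using hopf by (simp add: hopf_algebra_def)

lemma eps_add: "\<epsilon> (x + y) = \<epsilon> x + \<epsilon> y" by (rule lin_funD1[OF eps_lin])
lemma eps_sm: "\<epsilon> (sm c x) = c * \<epsilon> x" by (rule lin_funD2[OF eps_lin])
lemma S_add: "S (x + y) = S x + S y" by (rule lin_mapD1[OF S_lin])
lemma S_sm: "S (sm c x) = sm c (S x)" by (rule lin_mapD2[OF S_lin])

definition s2 :: "'a \<Rightarrow> ('a \<Rightarrow> 'a \<Rightarrow> 'k) \<Rightarrow> 'k" where
  "s2 x B = sum_list (map (\<lambda>(a,b). B a b) (\<Delta> x))"

lemma s2_add: "bil sm B \<Longrightarrow> s2 (x + y) B = s2 x B + s2 y B"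
  unfolding s2_def bil_def using T2[OF D_add, of B] by simp

lemma s2_sm: "bil sm B \<Longrightarrow> s2 (sm c x) B = c * s2 x B"
proof -
  assume b: "bil sm B"
  have "s2 (sm c x) B = sum_list (map (\<lambda>(a,b). B a b) (map (\<lambda>(a, b). (sm c a, b)) (\<Delta> x)))"
    unfolding s2_def using T2[OF D_sm, of B] b unfolding bil_def by simp
  also have "\<dots> = sum_list (map (\<lambda>(a,b). c * B a b) (\<Delta> x))"
    using b by (auto intro!: sum_list_cong simp: bil_D)
  also have "\<dots> = c * s2 x B" unfolding s2_def
    by (simp add: sum_list_const_mult[symmetric] case_prod_unfold)
  finally show ?thesis .
qed

lemma s2_lin: "bil sm B \<Longrightarrow> lin_fun sm (\<lambda>x. s2 x B)"
  by (simp add: lin_fun_def s2_add s2_sm)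

lemma s2_linF: "(\<And>a b. lin_fun sm (\<lambda>v. B v a b)) \<Longrightarrow> lin_fun sm (\<lambda>v. s2 x (B v))"
  unfolding s2_def by (rule lin_fun_sum_listI) (auto simp: case_prod_unfold)

lemma s2_mult: "bil sm B \<Longrightarrow> s2 (x * y) B = s2 x (\<lambda>a b. s2 y (\<lambda>c d. B (a * c) (b * d)))"
proof -
  assume b: "bil sm B"
  have "s2 (x * y) B = sum_list (map (\<lambda>(a,b). B a b) (concat (map (\<lambda>(a, b). map (\<lambda>(c, d). (a * c, b * d)) (\<Delta> y)) (\<Delta> x))))"
    unfolding s2_def using T2[OF D_mult, of B] b unfolding bil_def by simp
  also have "\<dots> = s2 x (\<lambda>a b. s2 y (\<lambda>c d. B (a * c) (b * d)))"
    unfolding s2_def by (simp add: sum_list_concat_map comp_def case_prod_unfold)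
  finally show ?thesis .
qed

lemma s2_one: "bil sm B \<Longrightarrow> s2 1 B = B 1 1"
  unfolding s2_def bil_def using T2[OF D_one, of B] by simp

lemma coassoc3: assumes "tril sm G"
  shows "s2 x (\<lambda>a b. s2 b (\<lambda>c d. G a c d)) = s2 x (\<lambda>a b. s2 a (\<lambda>c d. G c d b))"
proof -
  have "sum_list (map (\<lambda>(a,b,d). G a b d) (delta3 \<Delta> x)) = sum_list (map (\<lambda>(a,b,d). G a b d) (delta3' \<Delta> x))"
    using T3[OF coassoc, of G] assms unfolding tril_def by simp
  then show ?thesis
    unfolding s2_def delta3_def delta3'_def by (simp add: sum_list_concat_map comp_def case_prod_unfold)
qed

lemma counitL_f: "lin_fun sm f \<Longrightarrow> s2 x (\<lambda>a b. \<epsilon> a * f b) = f x"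
proof -
  assume f: "lin_fun sm f"
  have "f x = f (sum_list (map (\<lambda>(a, b). sm (\<epsilon> a) b) (\<Delta> x)))" by (simp add: counitL)
  also have "\<dots> = s2 x (\<lambda>a b. \<epsilon> a * f b)"
    unfolding s2_def lin_fun_sum_list[OF f] by (auto intro!: sum_list_cong simp: lin_funD2[OF f])
  finally show ?thesis by simp
qed

lemma counitR_f: "lin_fun sm f \<Longrightarrow> s2 x (\<lambda>a b. f a * \<epsilon> b) = f x"
proof -
  assume f: "lin_fun sm f"
  have "f x = f (sum_list (map (\<lambda>(a, b). sm (\<epsilon> b) a) (\<Delta> x)))" by (simp add: counitR)
  also have "\<dots> = s2 x (\<lambda>a b. f a * \<epsilon> b)"
    unfolding s2_def lin_fun_sum_list[OF f] by (auto intro!: sum_list_cong simp: lin_funD2[OF f] mult.commute)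
  finally show ?thesis by simp
qed

lemma antipL_f: "lin_fun sm f \<Longrightarrow> s2 x (\<lambda>a b. f (S a * b)) = \<epsilon> x * f 1"
proof -
  assume f: "lin_fun sm f"
  have "\<epsilon> x * f 1 = f (sum_list (map (\<lambda>(a, b). S a * b) (\<Delta> x)))" by (simp add: antipL lin_funD2[OF f])
  also have "\<dots> = s2 x (\<lambda>a b. f (S a * b))"
    unfolding s2_def lin_fun_sum_list[OF f] by (auto intro!: sum_list_cong)
  finally show ?thesis by simp
qed

lemma antipR_f: "lin_fun sm f \<Longrightarrow> s2 x (\<lambda>a b. f (a * S b)) = \<epsilon> x * f 1"
proof -
  assume f: "lin_fun sm f"
  have "\<epsilon> x * f 1 = f (sum_list (map (\<lambda>(a, b). a * S b) (\<Delta> x)))" by (simp add: antipR lin_funD2[OF f])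
  also have "\<dots> = s2 x (\<lambda>a b. f (a * S b))"
    unfolding s2_def lin_fun_sum_list[OF f] by (auto intro!: sum_list_cong)
  finally show ?thesis by simp
qed

end




lemma sum_list_swap: fixes f :: "'a \<Rightarrow> 'b \<Rightarrow> 'c::comm_monoid_add" shows
  "sum_list (map (\<lambda>x. sum_list (map (\<lambda>y. f x y) ys)) xs) = sum_list (map (\<lambda>y. sum_list (map (\<lambda>x. f x y) xs)) ys)"
  by (induction xs) (auto simp: sum_list_addf)

lemma upd_take_drop: "i < length t \<Longrightarrow> t[i := v] = take i t @ v # drop (Suc i) t"
  by (simp add: upd_conv_take_nth_drop)

context hopf begin

primrec Dn :: "nat \<Rightarrow> 'a \<Rightarrow> 'a list list" where
  "Dn 0 x = [[x]]"
| "Dn (Suc n) x = concat (map (\<lambda>(a,b). map ((#) a) (Dn n b)) (\<Delta> x))"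

definition SW :: "nat \<Rightarrow> 'a \<Rightarrow> ('a list \<Rightarrow> 'k) \<Rightarrow> 'k" where
  "SW n x F = sum_list (map F (Dn n x))"

definition ml :: "nat \<Rightarrow> ('a list \<Rightarrow> 'k) \<Rightarrow> bool" where
  "ml n F \<longleftrightarrow> (\<forall>l i. length l = n \<longrightarrow> i < n \<longrightarrow> lin_fun sm (\<lambda>v. F (l[i := v])))"

lemma SW_0: "SW 0 x F = F [x]"
  by (simp add: SW_def)

lemma SW_Suc: "SW (Suc n) x F = s2 x (\<lambda>a b. SW n b (\<lambda>t. F (a # t)))"
  by (simp add: SW_def s2_def sum_list_concat_map comp_def case_prod_unfold)

lemma Dn_length: "t \<in> set (Dn n x) \<Longrightarrow> length t = Suc n"
  by (induction n arbitrary: x t) auto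

lemma SW_cong: "(\<And>t. length t = Suc n \<Longrightarrow> F t = G t) \<Longrightarrow> SW n x F = SW n x G"
  unfolding SW_def by (rule sum_list_cong) (auto dest: Dn_length)

lemma SW_add: "SW n x (\<lambda>t. F t + G t) = SW n x F + SW n x G"
  by (simp add: SW_def sum_list_addf)
lemma SW_cmult: "SW n x (\<lambda>t. c * F t) = c * SW n x F"
  by (simp add: SW_def sum_list_const_mult)
lemma SW_multc: "SW n x (\<lambda>t. F t * c) = SW n x F * c"
  by (simp add: SW_def sum_list_mult_const)
lemma s2_cmult: "s2 x (\<lambda>a b. c * F a b) = c * s2 x F"
  by (simp add: s2_def sum_list_const_mult case_prod_unfold)
lemma s2_multc: "s2 x (\<lambda>a b. F a b * c) = s2 x F * c"
  by (simp add: s2_def sum_list_mult_const case_prod_unfold)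
lemma s2_add_F: "s2 x (\<lambda>a b. F a b + G a b) = s2 x F + s2 x G"
  by (simp add: s2_def sum_list_addf case_prod_unfold)

lemma SW_swap: "SW n x (\<lambda>t. SW m y (\<lambda>s. G t s)) = SW m y (\<lambda>s. SW n x (\<lambda>t. G t s))"
  unfolding SW_def by (rule sum_list_swap)
lemma SW_s2_swap: "SW n x (\<lambda>t. s2 y (\<lambda>a b. G t a b)) = s2 y (\<lambda>a b. SW n x (\<lambda>t. G t a b))"
  unfolding SW_def s2_def case_prod_unfold by (rule sum_list_swap)
lemma s2_swap: "s2 x (\<lambda>a b. s2 y (\<lambda>c d. G a b c d)) = s2 y (\<lambda>c d. s2 x (\<lambda>a b. G a b c d))"
  unfolding s2_def case_prod_unfold by (rule sum_list_swap)

lemma ml_Cons: "ml (Suc n) F \<Longrightarrow> ml n (\<lambda>t. F (a # t))"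
  unfolding ml_def
proof (intro allI impI)
  fix l :: "'a list" and i assume m: "\<forall>l i. length l = Suc n \<longrightarrow> i < Suc n \<longrightarrow> lin_fun sm (\<lambda>v. F (l[i := v]))"
    and "length l = n" "i < n"
  then have "lin_fun sm (\<lambda>v. F ((a # l)[Suc i := v]))" using m[rule_format, of "a # l" "Suc i"] by simp
  then show "lin_fun sm (\<lambda>v. F (a # l[i := v]))" by simp
qed

lemma ml_head: "ml (Suc n) F \<Longrightarrow> length t = n \<Longrightarrow> lin_fun sm (\<lambda>a. F (a # t))"
  unfolding ml_def
proof -
  assume m: "\<forall>l i. length l = Suc n \<longrightarrow> i < Suc n \<longrightarrow> lin_fun sm (\<lambda>v. F (l[i := v]))" and "length t = n"
  then have "lin_fun sm (\<lambda>v. F ((undefined # t)[0 := v]))" using m[rule_format, of "undefined # t" 0] by simp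
  then show ?thesis by simp
qed

lemma ml_pos: assumes "ml n F" "length t = n" "i < n"
  shows "lin_fun sm (\<lambda>v. F (take i t @ v # drop (Suc i) t))"
proof -
  have "lin_fun sm (\<lambda>v. F (t[i := v]))" using assms unfolding ml_def by blast
  then show ?thesis using assms(2,3) by (simp add: upd_take_drop)
qed

lemma SW_linF: "(\<And>t. length t = Suc n \<Longrightarrow> lin_fun sm (\<lambda>v. G v t)) \<Longrightarrow> lin_fun sm (\<lambda>v. SW n x (G v))"
  unfolding SW_def by (rule lin_fun_sum_listI) (auto dest: Dn_length)

lemma SW_lin: "ml (Suc n) F \<Longrightarrow> lin_fun sm (\<lambda>x. SW n x F)"
proof (induction n arbitrary: F)
  case 0
  then have "lin_fun sm (\<lambda>v. F ([undefined][0 := v]))" unfolding ml_def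
    by (metis length_Cons list.size(3) zero_less_Suc)
  then show ?case by (simp add: SW_0)
next
  case (Suc n)
  have "bil sm (\<lambda>a b. SW n b (\<lambda>t. F (a # t)))"
    unfolding bil_def
  proof (intro conjI allI)
    fix b show "lin_fun sm (\<lambda>a. SW n b (\<lambda>t. F (a # t)))"
      by (rule SW_linF) (rule ml_head[OF Suc.prems])
  next
    fix a show "lin_fun sm (\<lambda>b. SW n b (\<lambda>t. F (a # t)))"
      by (rule Suc.IH) (rule ml_Cons[OF Suc.prems])
  qed
  then show ?case by (simp add: SW_Suc s2_lin)
qed

lemma GC: "i \<le> n \<Longrightarrow> ml (Suc (Suc n)) F \<Longrightarrow>
   SW n x (\<lambda>t. s2 (t!i) (\<lambda>a b. F (take i t @ a # b # drop (Suc i) t))) = SW (Suc n) x F"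
proof (induction n arbitrary: x F i)
  case 0
  then show ?case by (simp add: SW_0 SW_Suc)
next
  case (Suc m)
  show ?case
  proof (cases i)
    case 0
    have tr: "tril sm (\<lambda>a b d. SW m d (\<lambda>t. F (a # b # t)))"
      unfolding tril_def
    proof (intro conjI allI)
      fix b d show "lin_fun sm (\<lambda>a. SW m d (\<lambda>t. F (a # b # t)))"
        by (rule SW_linF) (auto intro: ml_head[OF Suc.prems(2)])
    next
      fix a d show "lin_fun sm (\<lambda>b. SW m d (\<lambda>t. F (a # b # t)))"
        by (rule SW_linF) (auto intro: ml_head[OF ml_Cons[OF Suc.prems(2)]])
    next
      fix a b show "lin_fun sm (\<lambda>d. SW m d (\<lambda>t. F (a # b # t)))"
        by (rule SW_lin) (rule ml_Cons[OF ml_Cons[OF Suc.prems(2)]])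
    qed
    have "SW (Suc m) x (\<lambda>t. s2 (t!i) (\<lambda>a b. F (take i t @ a # b # drop (Suc i) t)))
        = s2 x (\<lambda>c d. SW m d (\<lambda>t. s2 c (\<lambda>a b. F (a # b # t))))"
      using 0 by (simp add: SW_Suc)
    also have "\<dots> = s2 x (\<lambda>c d. s2 c (\<lambda>a b. SW m d (\<lambda>t. F (a # b # t))))"
      by (simp add: SW_s2_swap)
    also have "\<dots> = s2 x (\<lambda>a e. s2 e (\<lambda>b d. SW m d (\<lambda>t. F (a # b # t))))"
      using coassoc3[OF tr, of x] by simp
    also have "\<dots> = SW (Suc (Suc m)) x F"
      by (simp add: SW_Suc)
    finally show ?thesis .
  next
    case (Suc j)
    with Suc.prems have j: "j \<le> m" by simp
    have "SW (Suc m) x (\<lambda>t. s2 (t!i) (\<lambda>a b. F (take i t @ a # b # drop (Suc i) t)))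
        = s2 x (\<lambda>c d. SW m d (\<lambda>t. s2 (t!j) (\<lambda>a b. F (c # (take j t @ a # b # drop (Suc j) t)))))"
      using Suc by (simp add: SW_Suc)
    also have "\<dots> = s2 x (\<lambda>c d. SW (Suc m) d (\<lambda>t. F (c # t)))"
      using Suc.IH[OF j ml_Cons[OF Suc.prems(2)]] by simp
    also have "\<dots> = SW (Suc (Suc m)) x F"
      by (simp add: SW_Suc)
    finally show ?thesis .
  qed
qed

lemma GC_rule:
  assumes "i \<le> n" "ml (Suc (Suc n)) F"
    and "\<And>t. length t = Suc n \<Longrightarrow> G t = s2 (t!i) (\<lambda>a b. F (take i t @ a # b # drop (Suc i) t))"
  shows "SW n x G = SW (Suc n) x F"
proof -
  have "SW n x G = SW n x (\<lambda>t. s2 (t!i) (\<lambda>a b. F (take i t @ a # b # drop (Suc i) t)))"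
    by (rule SW_cong) (simp add: assms(3))
  also have "\<dots> = SW (Suc n) x F" by (rule GC[OF assms(1,2)])
  finally show ?thesis .
qed

lemma list_split_facts:
  assumes "length t = Suc n" "i \<le> n"
  shows "take i (take i t @ a # b # drop (Suc i) t) = take i t"
    "drop (Suc i) (take i t @ a # b # drop (Suc i) t) = b # drop (Suc i) t"
    "drop (Suc (Suc i)) (take i t @ a # b # drop (Suc i) t) = drop (Suc i) t"
    "take (Suc i) (take i t @ a # b # drop (Suc i) t) = take i t @ [a]"
    "(take i t @ a # b # drop (Suc i) t) ! i = a"
    "(take i t @ a # b # drop (Suc i) t) ! Suc i = b"
    "length (take i t @ a # b # drop (Suc i) t) = Suc (Suc n)"
  using assms by (simp_all add: nth_append min_def)

lemma CUL:
  assumes i: "i \<le> n" and mG: "ml (Suc (Suc n)) G"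
    and G: "\<And>t. length t = Suc (Suc n) \<Longrightarrow> G t = \<epsilon> (t!i) * K (take i t @ drop (Suc i) t)"
    and mK: "ml (Suc n) K"
  shows "SW (Suc n) x G = SW n x K"
proof -
  have "SW (Suc n) x G = SW n x (\<lambda>t. s2 (t!i) (\<lambda>a b. G (take i t @ a # b # drop (Suc i) t)))"
    by (rule GC[OF i mG, symmetric])
  also have "\<dots> = SW n x K"
  proof (rule SW_cong)
    fix t :: "'a list" assume t: "length t = Suc n"
    have "s2 (t!i) (\<lambda>a b. G (take i t @ a # b # drop (Suc i) t)) =
          s2 (t!i) (\<lambda>a b. \<epsilon> a * K (take i t @ b # drop (Suc i) t))"
      using G list_split_facts[OF t i] by simp
    also have "\<dots> = K (take i t @ (t!i) # drop (Suc i) t)"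
      by (rule counitL_f) (rule ml_pos[OF mK t], use i in simp)
    also have "\<dots> = K t" using t i by (simp add: id_take_nth_drop[symmetric])
    finally show "s2 (t!i) (\<lambda>a b. G (take i t @ a # b # drop (Suc i) t)) = K t" .
  qed
  finally show ?thesis .
qed

lemma CUR:
  assumes i: "i \<le> n" and mG: "ml (Suc (Suc n)) G"
    and G: "\<And>t. length t = Suc (Suc n) \<Longrightarrow> G t = K (take (Suc i) t @ drop (Suc (Suc i)) t) * \<epsilon> (t!(Suc i))"
    and mK: "ml (Suc n) K"
  shows "SW (Suc n) x G = SW n x K"
proof -
  have "SW (Suc n) x G = SW n x (\<lambda>t. s2 (t!i) (\<lambda>a b. G (take i t @ a # b # drop (Suc i) t)))"
    by (rule GC[OF i mG, symmetric])
  also have "\<dots> = SW n x K"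
  proof (rule SW_cong)
    fix t :: "'a list" assume t: "length t = Suc n"
    have "s2 (t!i) (\<lambda>a b. G (take i t @ a # b # drop (Suc i) t)) =
          s2 (t!i) (\<lambda>a b. K (take i t @ a # drop (Suc i) t) * \<epsilon> b)"
      using G list_split_facts[OF t i] by simp
    also have "\<dots> = K (take i t @ (t!i) # drop (Suc i) t)"
      by (rule counitR_f) (rule ml_pos[OF mK t], use i in simp)
    also have "\<dots> = K t" using t i by (simp add: id_take_nth_drop[symmetric])
    finally show "s2 (t!i) (\<lambda>a b. G (take i t @ a # b # drop (Suc i) t)) = K t" .
  qed
  finally show ?thesis .
qed

lemma APR:
  assumes i: "i \<le> n" and mG: "ml (Suc (Suc n)) G"
    and G: "\<And>t. length t = Suc (Suc n) \<Longrightarrow> G t = K (take i t @ (t!i * S (t!(Suc i))) # drop (Suc (Suc i)) t)"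
    and mK: "ml (Suc n) K"
  shows "SW (Suc n) x G = SW n x (\<lambda>t. \<epsilon> (t!i) * K (take i t @ 1 # drop (Suc i) t))"
proof -
  have "SW (Suc n) x G = SW n x (\<lambda>t. s2 (t!i) (\<lambda>a b. G (take i t @ a # b # drop (Suc i) t)))"
    by (rule GC[OF i mG, symmetric])
  also have "\<dots> = SW n x (\<lambda>t. \<epsilon> (t!i) * K (take i t @ 1 # drop (Suc i) t))"
  proof (rule SW_cong)
    fix t :: "'a list" assume t: "length t = Suc n"
    have "s2 (t!i) (\<lambda>a b. G (take i t @ a # b # drop (Suc i) t)) =
          s2 (t!i) (\<lambda>a b. K (take i t @ (a * S b) # drop (Suc i) t))"
      using G list_split_facts[OF t i] by simp
    also have "\<dots> = \<epsilon> (t!i) * K (take i t @ 1 # drop (Suc i) t)"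
      by (rule antipR_f) (rule ml_pos[OF mK t], use i in simp)
    finally show "s2 (t!i) (\<lambda>a b. G (take i t @ a # b # drop (Suc i) t)) = \<epsilon> (t!i) * K (take i t @ 1 # drop (Suc i) t)" .
  qed
  finally show ?thesis .
qed

lemma APL:
  assumes i: "i \<le> n" and mG: "ml (Suc (Suc n)) G"
    and G: "\<And>t. length t = Suc (Suc n) \<Longrightarrow> G t = K (take i t @ (S (t!i) * t!(Suc i)) # drop (Suc (Suc i)) t)"
    and mK: "ml (Suc n) K"
  shows "SW (Suc n) x G = SW n x (\<lambda>t. \<epsilon> (t!i) * K (take i t @ 1 # drop (Suc i) t))"
proof -
  have "SW (Suc n) x G = SW n x (\<lambda>t. s2 (t!i) (\<lambda>a b. G (take i t @ a # b # drop (Suc i) t)))"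
    by (rule GC[OF i mG, symmetric])
  also have "\<dots> = SW n x (\<lambda>t. \<epsilon> (t!i) * K (take i t @ 1 # drop (Suc i) t))"
  proof (rule SW_cong)
    fix t :: "'a list" assume t: "length t = Suc n"
    have "s2 (t!i) (\<lambda>a b. G (take i t @ a # b # drop (Suc i) t)) =
          s2 (t!i) (\<lambda>a b. K (take i t @ (S a * b) # drop (Suc i) t))"
      using G list_split_facts[OF t i] by simp
    also have "\<dots> = \<epsilon> (t!i) * K (take i t @ 1 # drop (Suc i) t)"
      by (rule antipL_f) (rule ml_pos[OF mK t], use i in simp)
    finally show "s2 (t!i) (\<lambda>a b. G (take i t @ a # b # drop (Suc i) t)) = \<epsilon> (t!i) * K (take i t @ 1 # drop (Suc i) t)" .
  qed
  finally show ?thesis .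
qed

end




context hopf begin

lemma SW_1: "SW 1 x F = s2 x (\<lambda>a b. F [a, b])"
  by (simp add: SW_Suc[of 0, simplified] SW_0)

lemma GCr:
  assumes "i \<le> n" "m = Suc n" "ml (Suc m) F"
    and "\<And>t. length t = m \<Longrightarrow> G t = s2 (t!i) (\<lambda>a b. F (take i t @ a # b # drop (Suc i) t))"
  shows "SW n x G = SW m x F"
  using GC_rule[of i n F G x] assms by simp

lemma CULr:
  assumes "i < m" "m = Suc n" "ml (Suc m) G"
    and "\<And>t. length t = Suc m \<Longrightarrow> G t = \<epsilon> (t!i) * K (take i t @ drop (Suc i) t)"
    and "ml m K"
  shows "SW m x G = SW n x K"
  using CUL[of i n G K x] assms by simp

lemma CURr:
  assumes "i < m" "m = Suc n" "ml (Suc m) G"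
    and "\<And>t. length t = Suc m \<Longrightarrow> G t = K (take (Suc i) t @ drop (Suc (Suc i)) t) * \<epsilon> (t!(Suc i))"
    and "ml m K"
  shows "SW m x G = SW n x K"
  using CUR[of i n G K x] assms by simp

lemma APRr:
  assumes "i < m" "m = Suc n" "ml (Suc m) G"
    and "\<And>t. length t = Suc m \<Longrightarrow> G t = K (take i t @ (t!i * S (t!(Suc i))) # drop (Suc (Suc i)) t)"
    and "ml m K"
    and "\<And>t. length t = m \<Longrightarrow> H t = \<epsilon> (t!i) * K (take i t @ 1 # drop (Suc i) t)"
  shows "SW m x G = SW n x H"
proof -
  have "SW m x G = SW n x (\<lambda>t. \<epsilon> (t!i) * K (take i t @ 1 # drop (Suc i) t))"
    using APR[of i n G K x] assms by simp
  also have "\<dots> = SW n x H" by (rule SW_cong) (simp add: assms)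
  finally show ?thesis .
qed

lemma APLr:
  assumes "i < m" "m = Suc n" "ml (Suc m) G"
    and "\<And>t. length t = Suc m \<Longrightarrow> G t = K (take i t @ (S (t!i) * t!(Suc i)) # drop (Suc (Suc i)) t)"
    and "ml m K"
    and "\<And>t. length t = m \<Longrightarrow> H t = \<epsilon> (t!i) * K (take i t @ 1 # drop (Suc i) t)"
  shows "SW m x G = SW n x H"
proof -
  have "SW m x G = SW n x (\<lambda>t. \<epsilon> (t!i) * K (take i t @ 1 # drop (Suc i) t))"
    using APL[of i n G K x] assms by simp
  also have "\<dots> = SW n x H" by (rule SW_cong) (simp add: assms)
  finally show ?thesis .
qed

lemmas lsimps = S_add S_sm distrib_left distrib_right sm_mult_left sm_mult_right eps_add eps_sm

lemma S_mult_h: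
  assumes h: "lin_fun sm h"
  shows "h (S b * S a) = h (S (a * b))"
proof -
  note hs = lin_funD1[OF h] lin_funD2[OF h]
  have l1: "lin_fun sm (\<lambda>v. h (S v * X))" for X by (simp add: lin_fun_def lsimps hs)
  have l2: "lin_fun sm (\<lambda>v. h (X * S v))" for X by (simp add: lin_fun_def lsimps hs)
  have l3: "lin_fun sm (\<lambda>v. h (X * v))" for X by (simp add: lin_fun_def lsimps hs)
  have "h (S b * S a) = s2 a (\<lambda>a0 a1. h (S b * S a0) * \<epsilon> a1)"
    by (rule counitR_f[OF l2, symmetric])
  also have "\<dots> = s2 a (\<lambda>a0 a1. s2 b (\<lambda>b0 b1. h (S b0 * S a0) * \<epsilon> b1) * \<epsilon> a1)"
    by (simp add: counitR_f[OF l1])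
  also have "\<dots> = SW 1 a (\<lambda>t. SW 1 b (\<lambda>u. \<epsilon> (t!1 * u!1) * h (S (u!0) * S (t!0))))"
    by (simp add: SW_1 SW_Suc SW_0 eps_mult s2_multc[symmetric] s2_cmult[symmetric] mult_ac)
  also have "\<dots> = SW 1 a (\<lambda>t. SW 1 b (\<lambda>u. s2 (t!1 * u!1) (\<lambda>p q. h (S (u!0) * S (t!0) * (p * S q)))))"
    by (simp add: antipR_f[OF l3])
  also have "\<dots> = SW 1 a (\<lambda>t. SW 1 b (\<lambda>u. s2 (t!1) (\<lambda>p q. s2 (u!1) (\<lambda>r s. h (S (u!0) * S (t!0) * (p * r * S (q * s)))))))"
  proof -
    have "bil sm (\<lambda>p q. h (X * (p * S q)))" for X
      unfolding bil_def by (simp add: lin_fun_def lsimps hs)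
    then show ?thesis by (simp add: s2_mult)
  qed
  also have "\<dots> = SW 1 a (\<lambda>t. s2 (t!1) (\<lambda>p q. SW 1 b (\<lambda>u. s2 (u!1) (\<lambda>r s. h (S (u!0) * S (t!0) * (p * r * S (q * s)))))))"
    by (simp add: SW_s2_swap)
  also have "\<dots> = SW 2 a (\<lambda>t. SW 1 b (\<lambda>u. s2 (u!1) (\<lambda>r s. h (S (u!0) * S (t!0) * (t!1 * r * S (t!2 * s))))))"
    apply (rule GCr[where i=1 and n=1 and m=2])
       apply simp
      apply simp
     apply (unfold ml_def)
     apply (auto simp: length_Suc_conv eval_nat_numeral less_Suc_eq intro!: SW_linF s2_linF)
       apply (auto simp: lin_fun_def lsimps hs)
    done
  also have "\<dots> = SW 2 a (\<lambda>t. SW 2 b (\<lambda>u. h (S (u!0) * S (t!0) * (t!1 * u!1 * S (t!2 * u!2)))))"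
    apply (rule SW_cong)
    apply (rule GCr[where i=1 and n=1 and m=2])
       apply simp
      apply simp
     apply (unfold ml_def)
     apply (auto simp: length_Suc_conv eval_nat_numeral less_Suc_eq)
       apply (auto simp: lin_fun_def lsimps hs)
    done
  also have "\<dots> = SW 1 a (\<lambda>t. \<epsilon> (t!0) * SW 2 b (\<lambda>u. h (S (u!0) * u!1 * S (t!1 * u!2))))"
    apply (rule APLr[where i=0 and n=1 and m=2 and K="\<lambda>l. SW 2 b (\<lambda>u. h (S (u!0) * (l!0) * u!1 * S (l!1 * u!2)))"])
         apply simp
        apply simp
       apply (unfold ml_def)
       apply (auto simp: length_Suc_conv eval_nat_numeral less_Suc_eq intro!: SW_linF)
         apply (auto simp: lin_fun_def lsimps hs mult.assoc)
    done
  also have "\<dots> = SW 0 a (\<lambda>l. SW 2 b (\<lambda>u. h (S (u!0) * u!1 * S (l!0 * u!2))))"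
    apply (rule CULr[where i=0 and n=0 and m=1])
        apply simp
       apply simp
      apply (unfold ml_def)
      apply (auto simp: length_Suc_conv eval_nat_numeral less_Suc_eq intro!: SW_linF lin_fun_cmult)
        apply (auto simp: lin_fun_def lsimps hs)
    done
  also have "\<dots> = SW 2 b (\<lambda>u. h (S (u!0) * u!1 * S (a * u!2)))"
    by (simp add: SW_0)
  also have "\<dots> = SW 1 b (\<lambda>u. \<epsilon> (u!0) * h (S (a * u!1)))"
    apply (rule APLr[where i=0 and n=1 and m=2 and K="\<lambda>l. h (l!0 * S (a * l!1))"])
         apply simp
        apply simp
       apply (unfold ml_def)
       apply (auto simp: length_Suc_conv eval_nat_numeral less_Suc_eq)
         apply (auto simp: lin_fun_def lsimps hs mult.assoc)
    done
  also have "\<dots> = SW 0 b (\<lambda>l. h (S (a * l!0)))"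
    apply (rule CULr[where i=0 and n=0 and m=1])
        apply simp
       apply simp
      apply (unfold ml_def)
      apply (auto simp: length_Suc_conv eval_nat_numeral less_Suc_eq intro!: lin_fun_cmult)
        apply (auto simp: lin_fun_def lsimps hs)
    done
  also have "\<dots> = h (S (a * b))" by (simp add: SW_0)
  finally show ?thesis .
qed


lemma S_mult: "S (a * b) = S b * S a"
  by (rule sep) (simp add: S_mult_h)

lemma S_one: "S 1 = 1"
proof (rule sep)
  fix h assume h: "lin_fun sm h"
  have "bil sm (\<lambda>a b. h (S a * b))" unfolding bil_def
    by (simp add: lin_fun_def lsimps lin_funD1[OF h] lin_funD2[OF h])
  then have "s2 1 (\<lambda>a b. h (S a * b)) = h (S 1 * 1)" by (rule s2_one)
  moreover have "s2 1 (\<lambda>a b. h (S a * b)) = h 1"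
    using antipL_f[OF h, of 1] eps_one by simp
  ultimately show "h (S 1) = h 1" by simp
qed

lemma s2_linS: "(\<And>b. lin_fun sm (\<lambda>a. B a b)) \<Longrightarrow> (\<And>a. lin_fun sm (\<lambda>b. B a b)) \<Longrightarrow> lin_fun sm (\<lambda>v. s2 (S v) B)"
  using lin_fun_comp[OF S_lin s2_lin[of B]] unfolding bil_def by simp

lemma s2_linA: "(\<And>b. lin_fun sm (\<lambda>a. B a b)) \<Longrightarrow> (\<And>a. lin_fun sm (\<lambda>b. B a b)) \<Longrightarrow> lin_fun sm (\<lambda>v. s2 v B)"
  using s2_lin[of B] unfolding bil_def by simp

lemma DS_fg:
  assumes f: "lin_fun sm f" and g: "lin_fun sm g"
  shows "s2 (S x) (\<lambda>a b. f a * g b) = s2 x (\<lambda>a b. f (S b) * g (S a))"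
proof -
  note fs = lin_funD1[OF f] lin_funD2[OF f] and gs = lin_funD1[OF g] lin_funD2[OF g]
  define T where "T = SW 2 x (\<lambda>t. s2 (S (t!0)) (\<lambda>u v. s2 (t!1) (\<lambda>p q. s2 (t!2) (\<lambda>r s. f (u * p * S s) * g (v * q * S r)))))"
  have bilB: "bil sm (\<lambda>w1 w2. s2 y (\<lambda>r s. f (w1 * S s) * g (w2 * S r)))" for y
    unfolding bil_def
    by (auto simp: lin_fun_def lsimps fs gs s2_add_F s2_cmult mult.assoc mult.left_commute)
  have "T = SW 2 x (\<lambda>t. s2 (S (t!0) * t!1) (\<lambda>w1 w2. s2 (t!2) (\<lambda>r s. f (w1 * S s) * g (w2 * S r))))"
    unfolding T_def by (simp add: s2_mult[OF bilB])
  also have "\<dots> = SW 1 x (\<lambda>t. \<epsilon> (t!0) * s2 (t!1) (\<lambda>r s. f (S s) * g (S r)))"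
    apply (rule APLr[where i=0 and n=1 and m=2 and K="\<lambda>l. s2 (l!0) (\<lambda>w1 w2. s2 (l!1) (\<lambda>r s. f (w1 * S s) * g (w2 * S r)))"])
         apply simp
        apply simp
       apply (unfold ml_def)
       apply (auto simp: length_Suc_conv eval_nat_numeral less_Suc_eq intro!: s2_linS s2_linA s2_linF)
                  apply (auto simp: lin_fun_def lsimps fs gs s2_add[OF bilB] s2_sm[OF bilB] s2_one[OF bilB])
    done
  also have "\<dots> = SW 0 x (\<lambda>l. s2 (l!0) (\<lambda>r s. f (S s) * g (S r)))"
    apply (rule CULr[where i=0 and n=0 and m=1])
        apply simp
       apply simp
      apply (unfold ml_def)
      apply (auto simp: length_Suc_conv eval_nat_numeral less_Suc_eq intro!: s2_linS s2_linA s2_linF lin_fun_cmult)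
           apply (auto simp: lin_fun_def lsimps fs gs)
    done
  finally have TR: "T = s2 x (\<lambda>a b. f (S b) * g (S a))" by (simp add: SW_0)
  have "T = SW 2 x (\<lambda>t. s2 (t!1) (\<lambda>p q. s2 (S (t!0)) (\<lambda>u v. s2 (t!2) (\<lambda>r s. f (u * p * S s) * g (v * q * S r)))))"
    unfolding T_def by (simp add: s2_swap[of "S _"])
  also have "\<dots> = SW 3 x (\<lambda>t. s2 (t!3) (\<lambda>r s. s2 (S (t!0)) (\<lambda>u v. f (u * t!1 * S s) * g (v * t!2 * S r))))"
    apply (rule GCr[where i=1 and n=2 and m=3])
       apply simp
      apply simp
     apply (unfold ml_def)
     apply (auto simp: length_Suc_conv eval_nat_numeral less_Suc_eq intro!: s2_linS s2_linA s2_linF)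
                 apply (auto simp: lin_fun_def lsimps fs gs s2_swap[of "S _"])
    done
  also have "\<dots> = SW 4 x (\<lambda>t. s2 (S (t!0)) (\<lambda>u v. f (u * t!1 * S (t!4)) * g (v * (t!2 * S (t!3)))))"
    apply (rule GCr[where i=3 and n=3 and m=4])
       apply simp
      apply simp
     apply (unfold ml_def)
     apply (auto simp: length_Suc_conv eval_nat_numeral less_Suc_eq intro!: s2_linS s2_linA s2_linF)
                 apply (auto simp: lin_fun_def lsimps fs gs s2_swap[of "S _"] mult.assoc)
    done
  also have "\<dots> = SW 3 x (\<lambda>t. \<epsilon> (t!2) * s2 (S (t!0)) (\<lambda>u v. f (u * t!1 * S (t!3)) * g v))"
    apply (rule APRr[where i=2 and n=3 and m=4 and K="\<lambda>l. s2 (S (l!0)) (\<lambda>u v. f (u * l!1 * S (l!3)) * g (v * l!2))"])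
         apply simp
        apply simp
       apply (unfold ml_def)
       apply (auto simp: length_Suc_conv eval_nat_numeral less_Suc_eq intro!: s2_linS s2_linA s2_linF)
                  apply (auto simp: lin_fun_def lsimps fs gs)
    done
  also have "\<dots> = SW 2 x (\<lambda>t. s2 (S (t!0)) (\<lambda>u v. f (u * (t!1 * S (t!2))) * g v))"
    apply (rule CULr[where i=2 and n=2 and m=3])
        apply simp
       apply simp
      apply (unfold ml_def)
      apply (auto simp: length_Suc_conv eval_nat_numeral less_Suc_eq intro!: s2_linS s2_linA s2_linF lin_fun_cmult)
           apply (auto simp: lin_fun_def lsimps fs gs mult.assoc)
    done
  also have "\<dots> = SW 1 x (\<lambda>t. \<epsilon> (t!1) * s2 (S (t!0)) (\<lambda>u v. f u * g v))"
    apply (rule APRr[where i=1 and n=1 and m=2 and K="\<lambda>l. s2 (S (l!0)) (\<lambda>u v. f (u * l!1) * g v)"])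
         apply simp
        apply simp
       apply (unfold ml_def)
       apply (auto simp: length_Suc_conv eval_nat_numeral less_Suc_eq intro!: s2_linS s2_linA s2_linF)
                  apply (auto simp: lin_fun_def lsimps fs gs)
    done
  also have "\<dots> = SW 0 x (\<lambda>l. s2 (S (l!0)) (\<lambda>u v. f u * g v))"
    apply (rule CURr[where i=0 and n=0 and m=1])
        apply simp
       apply simp
      apply (unfold ml_def)
      apply (auto simp: length_Suc_conv eval_nat_numeral less_Suc_eq intro!: s2_linS s2_linA s2_linF lin_fun_cmult lin_fun_multc)
           apply (auto simp: lin_fun_def lsimps fs gs mult.commute)
    done
  finally have "T = s2 (S x) (\<lambda>u v. f u * g v)" by (simp add: SW_0)
  with TR show ?thesis by simp
qed

lemma DS_tensor: "tensor2_eq sm (\<Delta> (S x)) (map (\<lambda>(a,b). (S b, S a)) (\<Delta> x))"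
  unfolding tensor2_eq_def using DS_fg unfolding s2_def by (simp add: case_prod_unfold comp_def)

lemma DS: "bil sm B \<Longrightarrow> s2 (S x) B = s2 x (\<lambda>a b. B (S b) (S a))"
  unfolding s2_def bil_def using T2[OF DS_tensor, of B] by (simp add: case_prod_unfold comp_def)


lemma invS_lin: assumes b: "bij S" shows "lin_map sm sm (inv S)"
proof -
  have inj: "inj S" using b by (rule bij_is_inj)
  have srj: "surj S" using b by (rule bij_is_surj)
  have "inv S (x + y) = inv S x + inv S y" for x y
    using inj by (rule injD) (simp add: S_add surj_f_inv_f[OF srj])
  moreover have "inv S (sm c x) = sm c (inv S x)" for c x
    using inj by (rule injD) (simp add: S_sm surj_f_inv_f[OF srj])
  ultimately show ?thesis by (simp add: lin_map_def)
qed

lemma antip_inv_f: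
  assumes b: "bij S" and f: "lin_fun sm f"
  shows "s2 x (\<lambda>a b. f (inv S b * a)) = \<epsilon> x * f 1"
proof -
  have inj: "inj S" using b by (rule bij_is_inj)
  have srj: "surj S" using b by (rule bij_is_surj)
  define w where "w = sum_list (map (\<lambda>(a,b). inv S b * a) (\<Delta> x))"
  have "S w = sum_list (map (\<lambda>(a,b). S a * b) (\<Delta> x))"
    unfolding w_def lin_map_sum_list[OF S_lin]
    by (rule sum_list_cong) (auto simp: S_mult surj_f_inv_f[OF srj])
  also have "\<dots> = S (sm (\<epsilon> x) 1)" by (simp add: antipL S_sm S_one)
  finally have "w = sm (\<epsilon> x) 1" using inj by (simp add: inj_eq)
  then have "f w = \<epsilon> x * f 1" by (simp add: lin_funD2[OF f])
  moreover have "f w = s2 x (\<lambda>a b. f (inv S b * a))"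
    unfolding w_def s2_def lin_fun_sum_list[OF f] by (simp add: case_prod_unfold)
  ultimately show ?thesis by simp
qed

lemma delta3_SW: "sum_list (map (\<lambda>(a,b,c). F a b c) (delta3 \<Delta> x)) = SW 2 x (\<lambda>t. F (t!0) (t!1) (t!2))"
  by (simp add: delta3_def numeral_2_eq_2 SW_Suc SW_0 s2_def
      sum_list_concat_map comp_def case_prod_unfold)

end



context hopf begin

definition act :: "('a \<Rightarrow> 'k) \<Rightarrow> 'a \<Rightarrow> 'a" where
  "act f v = sum_list (map (\<lambda>(a,b). sm (f b) a) (\<Delta> v))"

lemma act_h: "lin_fun sm h \<Longrightarrow> h (act f v) = s2 v (\<lambda>a b. h a * f b)"
  unfolding act_def s2_def by (simp add: lin_fun_sum_list case_prod_unfold lin_funD2 mult.commute)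

lemma act_lin: assumes f: "lin_fun sm f" shows "lin_map sm sm (act f)"
proof -
  have b: "bil sm (\<lambda>a b. h a * f b)" if "lin_fun sm h" for h
    using that f unfolding bil_def by (simp add: lin_fun_def algebra_simps)
  have "act f (x + y) = act f x + act f y" for x y
    by (rule sep) (simp add: act_h lin_funD1 s2_add[OF b])
  moreover have "act f (sm c x) = sm c (act f x)" for c x
    by (rule sep) (simp add: act_h lin_funD2 s2_sm[OF b])
  ultimately show ?thesis by (simp add: lin_map_def)
qed

lemma conv_eq: "conv \<Delta> f g x = s2 x (\<lambda>a b. f a * g b)"
  by (simp add: conv_def s2_def)

lemma conv_lin: "lin_fun sm f \<Longrightarrow> lin_fun sm g \<Longrightarrow> lin_fun sm (conv \<Delta> f g)"
  unfolding conv_eq[abs_def]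
  by (rule s2_linA) (simp_all add: lin_fun_def algebra_simps)

lemma act_act: assumes f: "lin_fun sm f" and g: "lin_fun sm g"
  shows "act f (act g v) = act (conv \<Delta> f g) v"
proof (rule sep)
  fix h assume h: "lin_fun sm h"
  have b: "bil sm (\<lambda>a b. h a * f b)"
    using h f unfolding bil_def by (simp add: lin_fun_def algebra_simps)
  have "h (act f (act g v)) = s2 (act g v) (\<lambda>a b. h a * f b)" by (simp add: act_h h)
  also have "\<dots> = s2 v (\<lambda>a' b'. g b' * s2 a' (\<lambda>a b. h a * f b))"
  proof -
    have "s2 (act g v) (\<lambda>a b. h a * f b) = sum_list (map (\<lambda>(a',b'). s2 (sm (g b') a') (\<lambda>a b. h a * f b)) (\<Delta> v))"
      using lin_fun_sum_list[OF s2_lin[OF b], of "\<lambda>(a,b). sm (g b) a" "\<Delta> v"]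
      by (simp add: act_def case_prod_unfold)
    also have "\<dots> = sum_list (map (\<lambda>(a',b'). g b' * s2 a' (\<lambda>a b. h a * f b)) (\<Delta> v))"
      by (simp add: s2_sm[OF b])
    also have "\<dots> = s2 v (\<lambda>a' b'. g b' * s2 a' (\<lambda>a b. h a * f b))"
      by (simp add: s2_def[of v])
    finally show ?thesis .
  qed
  also have "\<dots> = s2 v (\<lambda>c d. s2 c (\<lambda>a b. h a * f b * g d))"
    by (simp only: s2_cmult[symmetric]) (simp add: mult_ac)
  also have "\<dots> = s2 v (\<lambda>a e. s2 e (\<lambda>b d. h a * f b * g d))"
    by (rule coassoc3[symmetric]) (simp add: tril_def lin_fun_def lin_funD1[OF h] lin_funD2[OF h]
        lin_funD1[OF f] lin_funD2[OF f] lin_funD1[OF g] lin_funD2[OF g] algebra_simps)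
  also have "\<dots> = h (act (conv \<Delta> f g) v)"
    by (simp add: act_h[OF h] conv_eq s2_cmult[symmetric] mult.assoc)
  finally show "h (act f (act g v)) = h (act (conv \<Delta> f g) v)" .
qed

lemma eps_act: "lin_fun sm f \<Longrightarrow> \<epsilon> (act f v) = f v"
  by (simp add: act_h eps_lin counitL_f)

lemma act_eps: "act \<epsilon> v = v"
  unfolding act_def by (rule counitR)

lemma conv_one_sided:
  assumes a: "lin_fun sm \<alpha>" and b: "lin_fun sm \<beta>" and ab: "\<And>x. conv \<Delta> \<alpha> \<beta> x = \<epsilon> x"
  shows "conv \<Delta> \<beta> \<alpha> x = \<epsilon> x"
proof -
  interpret vpp: vector_space_pair sm sm ..
  have ab': "conv \<Delta> \<alpha> \<beta> = \<epsilon>" using ab by auto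
  define A where "A = act \<alpha>"
  define B where "B = act \<beta>"
  have AB: "A (B v) = v" for v unfolding A_def B_def by (simp add: act_act a b ab' act_eps)
  have linB: "Vector_Spaces.linear sm sm B" unfolding B_def
    using act_lin[OF b] vs.vector_space_axioms unfolding Vector_Spaces.linear_iff lin_map_def by auto
  have injB: "inj B" by (metis AB injI)
  define N where "N = {act f x | f. lin_fun sm f}"
  define P where "P = set (map fst (\<Delta> x))"
  have finP: "finite P" by (simp add: P_def)
  have sub: "vs.subspace N"
    unfolding vs.subspace_def
  proof (intro conjI ballI allI)
    have "act (\<lambda>_. 0) x = 0" by (simp add: act_def case_prod_unfold)
    moreover have "lin_fun sm (\<lambda>_::'a. 0::'k)" by (simp add: lin_fun_def)
    ultimately show "0 \<in> N" unfolding N_def by (metis (mono_tags, lifting) mem_Collect_eq)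
  next
    fix u w assume "u \<in> N" "w \<in> N"
    then obtain f g where fg: "lin_fun sm f" "lin_fun sm g" "u = act f x" "w = act g x" unfolding N_def by auto
    have "u + w = act (\<lambda>v. f v + g v) x"
      unfolding fg act_def by (simp add: sum_list_addf[symmetric] case_prod_unfold sm_add_left)
    moreover have "lin_fun sm (\<lambda>v. f v + g v)" using fg by (simp add: lin_fun_add)
    ultimately show "u + w \<in> N" unfolding N_def by blast
  next
    fix c u assume "u \<in> N"
    then obtain f where f: "lin_fun sm f" "u = act f x" unfolding N_def by auto
    have "sm c u = act (\<lambda>v. c * f v) x"
      unfolding f act_def by (simp add: sm_sum_list case_prod_unfold sm_sm)
    moreover have "lin_fun sm (\<lambda>v. c * f v)" using f by (simp add: lin_fun_cmult)
    ultimately show "sm c u \<in> N" unfolding N_def by blast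
  qed
  have NP: "N \<subseteq> vs.span P"
  proof
    fix u assume "u \<in> N"
    then obtain f where "u = act f x" unfolding N_def by auto
    moreover have "sum_list (map (\<lambda>(a,b). sm (f b) a) L) \<in> vs.span (set (map fst L))" for L
    proof (induction L)
      case Nil show ?case by (simp add: vs.span_zero)
    next
      case (Cons p L)
      obtain a b where p: "p = (a,b)" by (cases p)
      have "sm (f b) a \<in> vs.span (set (map fst (p # L)))" using p by (intro vs.span_scale vs.span_base) simp
      moreover have "sum_list (map (\<lambda>(a,b). sm (f b) a) L) \<in> vs.span (set (map fst (p # L)))"
        using Cons.IH vs.span_mono[of "set (map fst L)" "set (map fst (p#L))"] by auto
      ultimately show ?case using p by (simp add: vs.span_add)
    qed
    ultimately show "u \<in> vs.span P" unfolding act_def P_def by simp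
  qed
  have BN: "B u \<in> N" if "u \<in> N" for u
  proof -
    from that obtain f where f: "lin_fun sm f" "u = act f x" unfolding N_def by auto
    have "B u = act (conv \<Delta> \<beta> f) x" unfolding B_def f(2) by (rule act_act[OF b f(1)])
    moreover have "lin_fun sm (conv \<Delta> \<beta> f)" by (rule conv_lin[OF b f(1)])
    ultimately show ?thesis unfolding N_def by blast
  qed
  have AN: "A u \<in> N" if "u \<in> N" for u
  proof -
    from that obtain f where f: "lin_fun sm f" "u = act f x" unfolding N_def by auto
    have "A u = act (conv \<Delta> \<alpha> f) x" unfolding A_def f(2) by (rule act_act[OF a f(1)])
    moreover have "lin_fun sm (conv \<Delta> \<alpha> f)" by (rule conv_lin[OF a f(1)])
    ultimately show ?thesis unfolding N_def by blast
  qed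
  obtain Bs where Bs: "Bs \<subseteq> N" "vs.independent Bs" "N \<subseteq> vs.span Bs"
    using vs.maximal_independent_subset[of N] by blast
  have "Bs \<subseteq> vs.span P" using Bs(1) NP by blast
  then have finBs: "finite Bs" using vs.independent_span_bound[OF finP Bs(2)] by auto
  have indBB: "vs.independent (B ` Bs)"
    by (rule vpp.linear_independent_injective_image[OF linB Bs(2)]) (rule inj_on_subset[OF injB], simp)
  have cardBB: "card (B ` Bs) = card Bs" by (rule card_image) (rule inj_on_subset[OF injB], simp)
  have NB: "N \<subseteq> vs.span (B ` Bs)"
  proof
    fix u assume uN: "u \<in> N"
    show "u \<in> vs.span (B ` Bs)"
    proof (rule ccontr)
      assume nu: "u \<notin> vs.span (B ` Bs)"
      then have ind: "vs.independent (insert u (B ` Bs))" using indBB by (simp add: vs.independent_insert)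
      have "insert u (B ` Bs) \<subseteq> vs.span Bs" using uN Bs BN by (auto intro: subsetD)
      from vs.independent_span_bound[OF finBs ind this]
      have "card (insert u (B ` Bs)) \<le> card Bs" by simp
      moreover have "u \<notin> B ` Bs" using nu vs.span_base by blast
      ultimately show False using finBs cardBB by simp
    qed
  qed
  have spanBs: "vs.span Bs \<subseteq> N" using Bs(1) sub by (simp add: vs.span_minimal)
  have "act \<epsilon> x \<in> N" unfolding N_def using eps_lin by blast
  then have xN: "x \<in> N" by (simp add: act_eps)
  then obtain m where m: "m \<in> vs.span Bs" "x = B m"
    using NB vpp.linear_span_image[OF linB, of Bs] by auto
  have "B (A x) = x" using m AB by simp
  then have "act \<beta> (act \<alpha> x) = x" unfolding A_def B_def .
  then have "act (conv \<Delta> \<beta> \<alpha>) x = x" by (simp add: act_act a b)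
  then have "\<epsilon> (act (conv \<Delta> \<beta> \<alpha>) x) = \<epsilon> x" by simp
  then show ?thesis by (simp add: eps_act conv_lin a b)
qed

end



context hopf begin

lemma FLAT:
  assumes m3: "ml 3 (\<lambda>s. SW 1 (s!1) (\<lambda>u. F (s!0 # u) (s!2)))"
    and m4: "ml 4 (\<lambda>s. F [s!0, s!1, s!2] (s!3))"
  shows "SW 1 w (\<lambda>s. SW 2 (s!0) (\<lambda>s'. F s' (s!1))) = SW 3 w (\<lambda>s. F [s!0, s!1, s!2] (s!3))"
proof -
  have "SW 1 w (\<lambda>s. SW 2 (s!0) (\<lambda>s'. F s' (s!1))) = SW 1 w (\<lambda>s. s2 (s!0) (\<lambda>a b. SW 1 b (\<lambda>u. F (a # u) (s!1))))"
    by (rule SW_cong) (simp add: numeral_2_eq_2 SW_Suc SW_0)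
  also have "\<dots> = SW 2 w (\<lambda>s. SW 1 (s!1) (\<lambda>u. F (s!0 # u) (s!2)))"
    by (rule GCr[where i=0 and n=1 and m=2]) (use m3 in \<open>auto simp: length_Suc_conv\<close>)
  also have "\<dots> = SW 2 w (\<lambda>s. s2 (s!1) (\<lambda>a b. F [s!0, a, b] (s!2)))"
    by (rule SW_cong) (simp add: SW_1 SW_Suc SW_0)
  also have "\<dots> = SW 3 w (\<lambda>s. F [s!0, s!1, s!2] (s!3))"
    by (rule GCr[where i=1 and n=2 and m=3]) (use m4 in \<open>auto simp: length_Suc_conv eval_nat_numeral\<close>)
  finally show ?thesis .
qed

end

locale main =
  U: hopf smU \<Delta>U \<epsilon>U SU + V: hopf smV \<Delta>V \<epsilon>V SV
  for smU :: "'k::field \<Rightarrow> 'u::ring_1 \<Rightarrow> 'u" and \<Delta>U \<epsilon>U SU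
  and smV :: "'k \<Rightarrow> 'v::ring_1 \<Rightarrow> 'v" and \<Delta>V \<epsilon>V SV +
  fixes p :: "'u \<Rightarrow> 'v \<Rightarrow> 'k" and \<gamma> :: "'v \<Rightarrow> 'u"
  assumes bijU: "bij SU" and bijV: "bij SV"
    and P: "hopf_pairing smU \<Delta>U \<epsilon>U smV \<Delta>V \<epsilon>V p"
    and G: "hopf_map_cop smU \<Delta>U \<epsilon>U smV \<Delta>V \<epsilon>V \<gamma>"
    and comm: "\<And>y m. \<gamma> y * m =
       sum_list (map (\<lambda>(m1, m2, m3). sum_list (map (\<lambda>(y1, y2, y3).
          smU (p (inv SU m1) y3 * p m3 y1) (m2 * \<gamma> y2)) (delta3 \<Delta>V y))) (delta3 \<Delta>U m))"
begin

lemma p_add1: "p (m + n) y = p m y + p n y" using P by (simp add: hopf_pairing_def lin_fun_def)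
lemma p_sm1: "p (smU c m) y = c * p m y" using P by (simp add: hopf_pairing_def lin_fun_def)
lemma p_add2: "p m (x + y) = p m x + p m y" using P by (simp add: hopf_pairing_def lin_fun_def)
lemma p_sm2: "p m (smV c x) = c * p m x" using P by (simp add: hopf_pairing_def lin_fun_def)
lemma p_mult1: "p (m * n) x = V.s2 x (\<lambda>a b. p m a * p n b)"
  using P by (simp add: hopf_pairing_def V.s2_def)
lemma p_mult2: "p m (x * y) = U.s2 m (\<lambda>a b. p a x * p b y)"
  using P by (simp add: hopf_pairing_def U.s2_def)
lemma p_one1: "p 1 x = \<epsilon>V x" using P by (simp add: hopf_pairing_def)
lemma p_one2: "p m 1 = \<epsilon>U m" using P by (simp add: hopf_pairing_def)
lemma p_lin1: "lin_fun smU (\<lambda>m. p m x)" using P by (simp add: hopf_pairing_def)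
lemma p_lin2: "lin_fun smV (\<lambda>x. p m x)" using P by (simp add: hopf_pairing_def)

lemma g_lin: "lin_map smV smU \<gamma>" using G by (simp add: hopf_map_cop_def)
lemma g_add: "\<gamma> (x + y) = \<gamma> x + \<gamma> y" by (rule lin_mapD1[OF g_lin])
lemma g_sm: "\<gamma> (smV c x) = smU c (\<gamma> x)" by (rule lin_mapD2[OF g_lin])
lemma g_mult: "\<gamma> (x * y) = \<gamma> x * \<gamma> y" using G by (simp add: hopf_map_cop_def)
lemma g_one: "\<gamma> 1 = 1" using G by (simp add: hopf_map_cop_def)
lemma g_eps: "\<epsilon>U (\<gamma> y) = \<epsilon>V y" using G by (simp add: hopf_map_cop_def)
lemma g_cop_t: "tensor2_eq smU (\<Delta>U (\<gamma> y)) (map (\<lambda>(a, b). (\<gamma> b, \<gamma> a)) (\<Delta>V y))"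
  using G by (simp add: hopf_map_cop_def)
lemma g_cop: "bil smU B \<Longrightarrow> U.s2 (\<gamma> y) B = V.s2 y (\<lambda>a b. B (\<gamma> b) (\<gamma> a))"
  unfolding U.s2_def V.s2_def bil_def using U.T2[OF g_cop_t, of B] by (simp add: case_prod_unfold comp_def)

lemma iS_lin: "lin_map smU smU (inv SU)" by (rule U.invS_lin[OF bijU])
lemma iS_add: "inv SU (x + y) = inv SU x + inv SU y" by (rule lin_mapD1[OF iS_lin])
lemma iS_sm: "inv SU (smU c x) = smU c (inv SU x)" by (rule lin_mapD2[OF iS_lin])

lemmas msimps = V.S_add V.S_sm g_add g_sm p_add1 p_add2 p_sm1 p_sm2 iS_add iS_sm
  distrib_left distrib_right U.sm_mult_left U.sm_mult_right V.sm_mult_left V.sm_mult_right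
  V.eps_add V.eps_sm U.eps_add U.eps_sm V.s2_add_F V.s2_cmult U.s2_add_F U.s2_cmult
  V.SW_add V.SW_cmult U.SW_add U.SW_cmult mult.assoc mult.left_commute

lemma comm_h:
  assumes h: "lin_fun smU h"
  shows "h (\<gamma> y * m) = U.SW 2 m (\<lambda>s. V.SW 2 y (\<lambda>t. p (inv SU (s!0)) (t!2) * p (s!2) (t!0) * h (s!1 * \<gamma> (t!1))))"
proof -
  have "h (\<gamma> y * m) = sum_list (map (\<lambda>(m1, m2, m3). sum_list (map (\<lambda>(y1, y2, y3).
          p (inv SU m1) y3 * p m3 y1 * h (m2 * \<gamma> y2)) (delta3 \<Delta>V y))) (delta3 \<Delta>U m))"
    by (subst comm) (simp add: lin_fun_sum_list[OF h] case_prod_unfold lin_funD2[OF h])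
  also have "\<dots> = U.SW 2 m (\<lambda>s. V.SW 2 y (\<lambda>t. p (inv SU (s!0)) (t!2) * p (s!2) (t!0) * h (s!1 * \<gamma> (t!1))))"
    by (simp add: U.delta3_SW V.delta3_SW)
  finally show ?thesis .
qed

lemma g_tri:
  assumes t: "tril smU \<Phi>"
  shows "U.SW 2 (\<gamma> z) (\<lambda>s. \<Phi> (s!0) (s!1) (s!2)) = V.SW 2 z (\<lambda>s. \<Phi> (\<gamma> (s!2)) (\<gamma> (s!1)) (\<gamma> (s!0)))"
proof -
  have b1: "bil smU (\<lambda>a b. U.s2 b (\<lambda>c d. \<Phi> a c d))"
    using t unfolding bil_def tril_def by (auto intro!: U.s2_linA U.s2_linF)
  have b2: "bil smU (\<lambda>c d. \<Phi> a c d)" for a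
    using t unfolding bil_def tril_def by auto
  have "U.SW 2 (\<gamma> z) (\<lambda>s. \<Phi> (s!0) (s!1) (s!2)) = U.s2 (\<gamma> z) (\<lambda>a b. U.s2 b (\<lambda>c d. \<Phi> a c d))"
    by (simp add: numeral_2_eq_2 U.SW_Suc U.SW_0)
  also have "\<dots> = V.s2 z (\<lambda>a' b'. V.s2 a' (\<lambda>c d. \<Phi> (\<gamma> b') (\<gamma> d) (\<gamma> c)))"
    by (simp add: g_cop[OF b1] g_cop[OF b2])
  also have "\<dots> = V.SW 1 z (\<lambda>s. V.s2 (s!0) (\<lambda>c d. \<Phi> (\<gamma> (s!1)) (\<gamma> d) (\<gamma> c)))"
    by (simp add: V.SW_1 V.SW_Suc V.SW_0)
  also have "\<dots> = V.SW 2 z (\<lambda>s. \<Phi> (\<gamma> (s!2)) (\<gamma> (s!1)) (\<gamma> (s!0)))"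
    apply (rule V.GCr[where i=0 and n=1 and m=2])
       apply simp
      apply simp
     apply (unfold V.ml_def)
     using t unfolding tril_def
     apply (auto simp: length_Suc_conv eval_nat_numeral less_Suc_eq intro!: lin_fun_comp[OF g_lin])
    done
  finally show ?thesis .
qed

lemma TS: "V.s2 w (\<lambda>c d. V.s2 v (\<lambda>f e. p (inv SU (\<gamma> f)) c * p (\<gamma> e) d)) = \<epsilon>V v * \<epsilon>V w"
proof -
  have bB: "bil smU (\<lambda>a b. p (inv SU b * a) w)"
    unfolding bil_def by (simp add: lin_fun_def msimps)
  have "V.s2 w (\<lambda>c d. V.s2 v (\<lambda>f e. p (inv SU (\<gamma> f)) c * p (\<gamma> e) d)) =
        V.s2 v (\<lambda>f e. V.s2 w (\<lambda>c d. p (inv SU (\<gamma> f)) c * p (\<gamma> e) d))"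
    by (rule V.s2_swap)
  also have "\<dots> = V.s2 v (\<lambda>f e. p (inv SU (\<gamma> f) * \<gamma> e) w)"
    by (simp add: p_mult1)
  also have "\<dots> = U.s2 (\<gamma> v) (\<lambda>a b. p (inv SU b * a) w)"
    by (simp add: g_cop[OF bB])
  also have "\<dots> = \<epsilon>U (\<gamma> v) * p 1 w"
    by (rule U.antip_inv_f[OF bijU p_lin1])
  finally show ?thesis by (simp add: g_eps p_one1)
qed

end



context main begin

lemma E1:
  assumes h: "lin_fun smU h"
  shows "h (\<gamma> y1 * \<gamma> z1) = V.SW 2 y1 (\<lambda>t'. V.SW 2 z1 (\<lambda>s'.
     p (inv SU (\<gamma> (s'!2))) (t'!2) * p (\<gamma> (s'!0)) (t'!0) * h (\<gamma> (s'!1) * \<gamma> (t'!1))))"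
proof -
  note hs = lin_funD1[OF h] lin_funD2[OF h]
  have t: "tril smU (\<lambda>m1 m2 m3. V.SW 2 y1 (\<lambda>t. p (inv SU m1) (t!2) * p m3 (t!0) * h (m2 * \<gamma> (t!1))))"
    unfolding tril_def by (auto intro!: V.SW_linF simp: lin_fun_def msimps hs)
  have "h (\<gamma> y1 * \<gamma> z1) = U.SW 2 (\<gamma> z1) (\<lambda>s. V.SW 2 y1 (\<lambda>t. p (inv SU (s!0)) (t!2) * p (s!2) (t!0) * h (s!1 * \<gamma> (t!1))))"
    by (rule comm_h[OF h])
  also have "\<dots> = V.SW 2 z1 (\<lambda>s. V.SW 2 y1 (\<lambda>t. p (inv SU (\<gamma> (s!2))) (t!2) * p (\<gamma> (s!0)) (t!0) * h (\<gamma> (s!1) * \<gamma> (t!1))))"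
    by (rule g_tri[OF t])
  also have "\<dots> = V.SW 2 y1 (\<lambda>t'. V.SW 2 z1 (\<lambda>s'.
     p (inv SU (\<gamma> (s'!2))) (t'!2) * p (\<gamma> (s'!0)) (t'!0) * h (\<gamma> (s'!1) * \<gamma> (t'!1))))"
    by (rule V.SW_swap)
  finally show ?thesis .
qed

lemma TS': "V.s2 w (\<lambda>c d. V.s2 v (\<lambda>f e. p (\<gamma> e) d * p (inv SU (\<gamma> f)) c)) = \<epsilon>V v * \<epsilon>V w"
  using TS by (simp add: mult.commute)

lemma SS:
  assumes h: "lin_fun smU h"
  shows "V.s2 y (\<lambda>y1 y2. V.s2 z (\<lambda>z1 z2. h (\<gamma> y1 * \<gamma> z1) * p (\<gamma> z2) y2)) =
         V.s2 y (\<lambda>y1 y2. V.s2 z (\<lambda>z1 z2. p (\<gamma> z1) y1 * h (\<gamma> z2 * \<gamma> y2)))"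
proof -
  note hs = lin_funD1[OF h] lin_funD2[OF h]
  have "V.s2 y (\<lambda>y1 y2. V.s2 z (\<lambda>z1 z2. h (\<gamma> y1 * \<gamma> z1) * p (\<gamma> z2) y2)) =
    V.SW 1 y (\<lambda>t. V.SW 1 z (\<lambda>s. V.SW 2 (t!0) (\<lambda>t'. V.SW 2 (s!0) (\<lambda>s'.
     p (inv SU (\<gamma> (s'!2))) (t'!2) * p (\<gamma> (s'!0)) (t'!0) * h (\<gamma> (s'!1) * \<gamma> (t'!1)) * p (\<gamma> (s!1)) (t!1)))))"
  proof -
    have "V.s2 y (\<lambda>y1 y2. V.s2 z (\<lambda>z1 z2. h (\<gamma> y1 * \<gamma> z1) * p (\<gamma> z2) y2)) =
      V.SW 1 y (\<lambda>t. V.SW 1 z (\<lambda>s. h (\<gamma> (t!0) * \<gamma> (s!0)) * p (\<gamma> (s!1)) (t!1)))"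
      by (simp add: V.SW_1 V.SW_Suc V.SW_0)
    also have "\<dots> = V.SW 1 y (\<lambda>t. V.SW 1 z (\<lambda>s. V.SW 2 (t!0) (\<lambda>t'. V.SW 2 (s!0) (\<lambda>s'.
     p (inv SU (\<gamma> (s'!2))) (t'!2) * p (\<gamma> (s'!0)) (t'!0) * h (\<gamma> (s'!1) * \<gamma> (t'!1)) * p (\<gamma> (s!1)) (t!1)))))"
      apply (rule V.SW_cong)+
      apply (subst E1[OF h])
      apply (simp only: V.SW_multc)
      done
    finally show ?thesis .
  qed
  also have "\<dots> = V.SW 1 y (\<lambda>t. V.SW 2 (t!0) (\<lambda>t'. V.SW 1 z (\<lambda>s. V.SW 2 (s!0) (\<lambda>s'.
     p (inv SU (\<gamma> (s'!2))) (t'!2) * p (\<gamma> (s'!0)) (t'!0) * h (\<gamma> (s'!1) * \<gamma> (t'!1)) * p (\<gamma> (s!1)) (t!1)))))"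
    by (rule V.SW_cong) (rule V.SW_swap)
  also have "\<dots> = V.SW 3 y (\<lambda>t. V.SW 1 z (\<lambda>s. V.SW 2 (s!0) (\<lambda>s'.
     p (inv SU (\<gamma> (s'!2))) (t!2) * p (\<gamma> (s'!0)) (t!0) * h (\<gamma> (s'!1) * \<gamma> (t!1)) * p (\<gamma> (s!1)) (t!3))))"
  proof -
    have "V.SW 1 y (\<lambda>t. V.SW 2 (t!0) (\<lambda>t'. V.SW 1 z (\<lambda>s. V.SW 2 (s!0) (\<lambda>s'.
     p (inv SU (\<gamma> (s'!2))) (t'!2) * p (\<gamma> (s'!0)) (t'!0) * h (\<gamma> (s'!1) * \<gamma> (t'!1)) * p (\<gamma> (s!1)) (t!1)))))
      = V.SW 3 y (\<lambda>t. (\<lambda>t' y2. V.SW 1 z (\<lambda>s. V.SW 2 (s!0) (\<lambda>s'.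
     p (inv SU (\<gamma> (s'!2))) (t'!2) * p (\<gamma> (s'!0)) (t'!0) * h (\<gamma> (s'!1) * \<gamma> (t'!1)) * p (\<gamma> (s!1)) y2))) [t!0, t!1, t!2] (t!3))"
      apply (rule V.FLAT[where F="\<lambda>t' y2. V.SW 1 z (\<lambda>s. V.SW 2 (s!0) (\<lambda>s'.
     p (inv SU (\<gamma> (s'!2))) (t'!2) * p (\<gamma> (s'!0)) (t'!0) * h (\<gamma> (s'!1) * \<gamma> (t'!1)) * p (\<gamma> (s!1)) y2))"])
       apply (unfold V.ml_def)
       apply (auto simp: length_Suc_conv eval_nat_numeral less_Suc_eq V.ml_def intro!: V.SW_linF V.s2_linF V.SW_lin)
            apply (auto simp: lin_fun_def msimps hs)
      done
    then show ?thesis by simp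
  qed
  also have "\<dots> = V.SW 3 y (\<lambda>t. V.SW 3 z (\<lambda>s.
     p (inv SU (\<gamma> (s!2))) (t!2) * p (\<gamma> (s!0)) (t!0) * h (\<gamma> (s!1) * \<gamma> (t!1)) * p (\<gamma> (s!3)) (t!3)))"
  proof (rule V.SW_cong)
    fix t :: "'v list"
    have "V.SW 1 z (\<lambda>s. V.SW 2 (s!0) (\<lambda>s'.
     p (inv SU (\<gamma> (s'!2))) (t!2) * p (\<gamma> (s'!0)) (t!0) * h (\<gamma> (s'!1) * \<gamma> (t!1)) * p (\<gamma> (s!1)) (t!3)))
      = V.SW 3 z (\<lambda>s. (\<lambda>s' z2. p (inv SU (\<gamma> (s'!2))) (t!2) * p (\<gamma> (s'!0)) (t!0) * h (\<gamma> (s'!1) * \<gamma> (t!1)) * p (\<gamma> z2) (t!3)) [s!0, s!1, s!2] (s!3))"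
      apply (rule V.FLAT[where F="\<lambda>s' z2. p (inv SU (\<gamma> (s'!2))) (t!2) * p (\<gamma> (s'!0)) (t!0) * h (\<gamma> (s'!1) * \<gamma> (t!1)) * p (\<gamma> z2) (t!3)"])
       apply (unfold V.ml_def)
       apply (auto simp: length_Suc_conv eval_nat_numeral less_Suc_eq V.ml_def intro!: V.SW_linF V.s2_linF V.SW_lin lin_fun_cmult lin_fun_multc)
            apply (auto simp: lin_fun_def msimps hs)
      done
    then show "V.SW 1 z (\<lambda>s. V.SW 2 (s!0) (\<lambda>s'.
     p (inv SU (\<gamma> (s'!2))) (t!2) * p (\<gamma> (s'!0)) (t!0) * h (\<gamma> (s'!1) * \<gamma> (t!1)) * p (\<gamma> (s!1)) (t!3)))
      = V.SW 3 z (\<lambda>s. p (inv SU (\<gamma> (s!2))) (t!2) * p (\<gamma> (s!0)) (t!0) * h (\<gamma> (s!1) * \<gamma> (t!1)) * p (\<gamma> (s!3)) (t!3))"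
      by simp
  qed
  also have "\<dots> = V.SW 2 y (\<lambda>t. V.s2 (t!2) (\<lambda>c d. V.SW 3 z (\<lambda>s.
     p (inv SU (\<gamma> (s!2))) c * p (\<gamma> (s!0)) (t!0) * h (\<gamma> (s!1) * \<gamma> (t!1)) * p (\<gamma> (s!3)) d)))"
    apply (rule V.GCr[where i=2 and n=2 and m=3, symmetric])
       apply simp
      apply simp
     apply (unfold V.ml_def)
     apply (auto simp: length_Suc_conv eval_nat_numeral less_Suc_eq intro!: V.SW_linF V.s2_linF)
          apply (auto simp: lin_fun_def msimps hs)
    done
  also have "\<dots> = V.SW 2 y (\<lambda>t. V.s2 (t!2) (\<lambda>c d. V.SW 2 z (\<lambda>s. V.s2 (s!2) (\<lambda>f e.
     p (inv SU (\<gamma> f)) c * p (\<gamma> (s!0)) (t!0) * h (\<gamma> (s!1) * \<gamma> (t!1)) * p (\<gamma> e) d))))"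
    apply (rule V.SW_cong)
    apply (rule arg_cong[where f="V.s2 _"])
    apply (rule ext)+
    apply (rule V.GCr[where i=2 and n=2 and m=3, symmetric])
       apply simp
      apply simp
     apply (unfold V.ml_def)
     apply (auto simp: length_Suc_conv eval_nat_numeral less_Suc_eq intro!: V.SW_linF V.s2_linF)
          apply (auto simp: lin_fun_def msimps hs)
    done
  also have "\<dots> = V.SW 2 y (\<lambda>t. V.SW 2 z (\<lambda>s. V.s2 (t!2) (\<lambda>c d. V.s2 (s!2) (\<lambda>f e.
     p (inv SU (\<gamma> f)) c * p (\<gamma> e) d)) * (p (\<gamma> (s!0)) (t!0) * h (\<gamma> (s!1) * \<gamma> (t!1)))))"
    apply (rule V.SW_cong)
    apply (subst V.SW_s2_swap[symmetric])
    apply (rule V.SW_cong)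
    apply (simp add: V.s2_cmult[symmetric] V.s2_multc[symmetric] mult_ac)
    done
  also have "\<dots> = V.SW 2 y (\<lambda>t. V.SW 2 z (\<lambda>s. (p (\<gamma> (s!0)) (t!0) * h (\<gamma> (s!1) * \<gamma> (t!1)) * \<epsilon>V (t!2)) * \<epsilon>V (s!2)))"
    by (simp add: TS TS' mult_ac)
  also have "\<dots> = V.SW 2 y (\<lambda>t. V.SW 1 z (\<lambda>s. p (\<gamma> (s!0)) (t!0) * h (\<gamma> (s!1) * \<gamma> (t!1)) * \<epsilon>V (t!2)))"
    apply (rule V.SW_cong)
    apply (rule V.CURr[where i=1 and n=1 and m=2])
        apply simp
       apply simp
      apply (unfold V.ml_def)
      apply (auto simp: length_Suc_conv eval_nat_numeral less_Suc_eq)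
         apply (auto simp: lin_fun_def msimps hs)
    done
  also have "\<dots> = V.SW 1 y (\<lambda>t. V.SW 1 z (\<lambda>s. p (\<gamma> (s!0)) (t!0) * h (\<gamma> (s!1) * \<gamma> (t!1))))"
    apply (rule V.CURr[where i=1 and n=1 and m=2])
        apply simp
       apply simp
      apply (unfold V.ml_def)
      apply (auto simp: length_Suc_conv eval_nat_numeral less_Suc_eq intro!: V.SW_linF)
         apply (auto simp: lin_fun_def msimps hs V.SW_multc[symmetric])
    done
  also have "\<dots> = V.s2 y (\<lambda>y1 y2. V.s2 z (\<lambda>z1 z2. p (\<gamma> z1) y1 * h (\<gamma> z2 * \<gamma> y2)))"
    by (simp add: V.SW_1 V.SW_Suc V.SW_0)
  finally show ?thesis .
qed

end



context main begin

definition th where "th x = V.s2 x (\<lambda>a b. p (\<gamma> a) (SV b))"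
definition thi where "thi x = V.s2 x (\<lambda>a b. p (\<gamma> (SV (SV a))) b)"
definition up where "up x = V.s2 x (\<lambda>a b. p (\<gamma> b) (SV a))"
definition upi where "upi x = V.s2 x (\<lambda>a b. p (\<gamma> (SV (SV b))) a)"

lemma th_bil: "bil smV (\<lambda>a b. p (\<gamma> a) (SV b))" unfolding bil_def by (simp add: lin_fun_def msimps)
lemma thi_bil: "bil smV (\<lambda>a b. p (\<gamma> (SV (SV a))) b)" unfolding bil_def by (simp add: lin_fun_def msimps)
lemma up_bil: "bil smV (\<lambda>a b. p (\<gamma> b) (SV a))" unfolding bil_def by (simp add: lin_fun_def msimps)
lemma upi_bil: "bil smV (\<lambda>a b. p (\<gamma> (SV (SV b))) a)" unfolding bil_def by (simp add: lin_fun_def msimps)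

lemma th_lin: "lin_fun smV th" unfolding th_def[abs_def] by (rule V.s2_lin[OF th_bil])
lemma thi_lin: "lin_fun smV thi" unfolding thi_def[abs_def] by (rule V.s2_lin[OF thi_bil])
lemma up_lin: "lin_fun smV up" unfolding up_def[abs_def] by (rule V.s2_lin[OF up_bil])
lemma upi_lin: "lin_fun smV upi" unfolding upi_def[abs_def] by (rule V.s2_lin[OF upi_bil])

lemmas tsimps = lin_funD1[OF th_lin] lin_funD2[OF th_lin] lin_funD1[OF thi_lin] lin_funD2[OF thi_lin]
  lin_funD1[OF up_lin] lin_funD2[OF up_lin] lin_funD1[OF upi_lin] lin_funD2[OF upi_lin]

lemma C_id:
  assumes h: "lin_fun smU h"
  shows "V.s2 x (\<lambda>a b. h (\<gamma> a) * th b) = V.s2 x (\<lambda>a b. th a * h (\<gamma> (SV (SV b))))"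
proof -
  note hs = lin_funD1[OF h] lin_funD2[OF h]
  have "V.s2 x (\<lambda>a b. h (\<gamma> a) * th b) = V.SW 1 x (\<lambda>t. h (\<gamma> (t!0)) * th (t!1))"
    by (simp add: V.SW_1 V.SW_Suc V.SW_0)
  also have "\<dots> = V.SW 2 x (\<lambda>t. h (\<gamma> (t!0)) * p (\<gamma> (t!1)) (SV (t!2)))"
    apply (rule V.GCr[where i=1 and n=1 and m=2])
       apply simp
      apply simp
     apply (unfold V.ml_def)
     apply (auto simp: length_Suc_conv eval_nat_numeral less_Suc_eq)
       apply (auto simp: lin_fun_def msimps hs th_def)
    done
  also have "\<dots> = V.SW 3 x (\<lambda>t. h (\<gamma> (t!0)) * p (\<gamma> (t!1)) (SV (t!2)) * \<epsilon>V (t!3))"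
    apply (rule V.CURr[where i=2 and n=2 and m=3, symmetric])
        apply simp
       apply simp
      apply (unfold V.ml_def)
      apply (auto simp: length_Suc_conv eval_nat_numeral less_Suc_eq)
           apply (auto simp: lin_fun_def msimps hs)
    done
  also have "\<dots> = V.SW 4 x (\<lambda>t. h (\<gamma> (SV (SV (t!4))) * \<gamma> (SV (t!3)) * \<gamma> (t!0)) * p (\<gamma> (t!1)) (SV (t!2)))"
    apply (rule V.APRr[where i=3 and n=3 and m=4 and K="\<lambda>l. h (\<gamma> (SV (l!3)) * \<gamma> (l!0)) * p (\<gamma> (l!1)) (SV (l!2))", symmetric])
         apply simp
        apply simp
       apply (unfold V.ml_def)
       apply (auto simp: length_Suc_conv eval_nat_numeral less_Suc_eq)
                 apply (auto simp: lin_fun_def msimps hs V.S_mult g_mult V.S_one g_one)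
    done
  also have "\<dots> = V.SW 3 x (\<lambda>t. V.s2 (t!0) (\<lambda>a b. h (\<gamma> (SV (SV (t!3))) * \<gamma> (SV (t!2)) * \<gamma> a) * p (\<gamma> b) (SV (t!1))))"
    apply (rule V.GCr[where i=0 and n=3 and m=4, symmetric])
       apply simp
      apply simp
     apply (unfold V.ml_def)
     apply (auto simp: length_Suc_conv eval_nat_numeral less_Suc_eq)
              apply (auto simp: lin_fun_def msimps hs)
    done
  also have "\<dots> = V.SW 2 x (\<lambda>t. V.s2 (t!1) (\<lambda>c d. V.s2 (t!0) (\<lambda>a b. h (\<gamma> (SV (SV (t!2))) * \<gamma> (SV d) * \<gamma> a) * p (\<gamma> b) (SV c))))"
    apply (rule V.GCr[where i=1 and n=2 and m=3, symmetric])
       apply simp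
      apply simp
     apply (unfold V.ml_def)
     apply (auto simp: length_Suc_conv eval_nat_numeral less_Suc_eq V.ml_def intro!: V.s2_linF V.s2_linA)
              apply (auto simp: lin_fun_def msimps hs)
    done
  also have "\<dots> = V.SW 2 x (\<lambda>t. V.s2 (SV (t!1)) (\<lambda>y1 y2. V.s2 (t!0) (\<lambda>z1 z2. h (\<gamma> (SV (SV (t!2))) * (\<gamma> y1 * \<gamma> z1)) * p (\<gamma> z2) y2)))"
  proof (rule V.SW_cong)
    fix t :: "'v list"
    have b: "bil smV (\<lambda>y1 y2. V.s2 (t!0) (\<lambda>z1 z2. h (\<gamma> (SV (SV (t!2))) * (\<gamma> y1 * \<gamma> z1)) * p (\<gamma> z2) y2))"
      unfolding bil_def by (auto intro!: V.s2_linF simp: lin_fun_def msimps hs)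
    show "V.s2 (t!1) (\<lambda>c d. V.s2 (t!0) (\<lambda>a b. h (\<gamma> (SV (SV (t!2))) * \<gamma> (SV d) * \<gamma> a) * p (\<gamma> b) (SV c))) =
        V.s2 (SV (t!1)) (\<lambda>y1 y2. V.s2 (t!0) (\<lambda>z1 z2. h (\<gamma> (SV (SV (t!2))) * (\<gamma> y1 * \<gamma> z1)) * p (\<gamma> z2) y2))"
      by (simp add: V.DS[OF b] mult.assoc)
  qed
  also have "\<dots> = V.SW 2 x (\<lambda>t. V.s2 (SV (t!1)) (\<lambda>y1 y2. V.s2 (t!0) (\<lambda>z1 z2. p (\<gamma> z1) y1 * h (\<gamma> (SV (SV (t!2))) * (\<gamma> z2 * \<gamma> y2)))))"
  proof (rule V.SW_cong)
    fix t :: "'v list"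
    have h': "lin_fun smU (\<lambda>u. h (\<gamma> (SV (SV (t!2))) * u))" by (simp add: lin_fun_def msimps hs)
    show "V.s2 (SV (t!1)) (\<lambda>y1 y2. V.s2 (t!0) (\<lambda>z1 z2. h (\<gamma> (SV (SV (t!2))) * (\<gamma> y1 * \<gamma> z1)) * p (\<gamma> z2) y2)) =
       V.s2 (SV (t!1)) (\<lambda>y1 y2. V.s2 (t!0) (\<lambda>z1 z2. p (\<gamma> z1) y1 * h (\<gamma> (SV (SV (t!2))) * (\<gamma> z2 * \<gamma> y2))))"
      by (rule SS[OF h'])
  qed
  also have "\<dots> = V.SW 2 x (\<lambda>t. V.s2 (t!1) (\<lambda>c d. V.s2 (t!0) (\<lambda>a b. p (\<gamma> a) (SV d) * h (\<gamma> (SV (SV (t!2))) * (\<gamma> b * \<gamma> (SV c))))))"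
  proof (rule V.SW_cong)
    fix t :: "'v list"
    have b: "bil smV (\<lambda>y1 y2. V.s2 (t!0) (\<lambda>z1 z2. p (\<gamma> z1) y1 * h (\<gamma> (SV (SV (t!2))) * (\<gamma> z2 * \<gamma> y2))))"
      unfolding bil_def by (auto intro!: V.s2_linF simp: lin_fun_def msimps hs)
    show "V.s2 (SV (t!1)) (\<lambda>y1 y2. V.s2 (t!0) (\<lambda>z1 z2. p (\<gamma> z1) y1 * h (\<gamma> (SV (SV (t!2))) * (\<gamma> z2 * \<gamma> y2)))) =
       V.s2 (t!1) (\<lambda>c d. V.s2 (t!0) (\<lambda>a b. p (\<gamma> a) (SV d) * h (\<gamma> (SV (SV (t!2))) * (\<gamma> b * \<gamma> (SV c)))))"
      by (simp add: V.DS[OF b])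
  qed
  also have "\<dots> = V.SW 3 x (\<lambda>t. V.s2 (t!0) (\<lambda>a b. p (\<gamma> a) (SV (t!2)) * h (\<gamma> (SV (SV (t!3))) * (\<gamma> b * \<gamma> (SV (t!1))))))"
    apply (rule V.GCr[where i=1 and n=2 and m=3])
       apply simp
      apply simp
     apply (unfold V.ml_def)
     apply (auto simp: length_Suc_conv eval_nat_numeral less_Suc_eq V.ml_def intro!: V.s2_linF V.s2_linA)
              apply (auto simp: lin_fun_def msimps hs)
    done
  also have "\<dots> = V.SW 4 x (\<lambda>t. p (\<gamma> (t!0)) (SV (t!3)) * h (\<gamma> (SV (SV (t!4))) * (\<gamma> (t!1) * \<gamma> (SV (t!2)))))"
    apply (rule V.GCr[where i=0 and n=3 and m=4])
       apply simp
      apply simp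
     apply (unfold V.ml_def)
     apply (auto simp: length_Suc_conv eval_nat_numeral less_Suc_eq)
              apply (auto simp: lin_fun_def msimps hs)
    done
  also have "\<dots> = V.SW 3 x (\<lambda>t. \<epsilon>V (t!1) * (p (\<gamma> (t!0)) (SV (t!2)) * h (\<gamma> (SV (SV (t!3))))))"
    apply (rule V.APRr[where i=1 and n=3 and m=4 and K="\<lambda>l. p (\<gamma> (l!0)) (SV (l!2)) * h (\<gamma> (SV (SV (l!3))) * \<gamma> (l!1))"])
         apply simp
        apply simp
       apply (unfold V.ml_def)
       apply (auto simp: length_Suc_conv eval_nat_numeral less_Suc_eq)
                 apply (auto simp: lin_fun_def msimps hs g_mult g_one)
    done
  also have "\<dots> = V.SW 2 x (\<lambda>t. p (\<gamma> (t!0)) (SV (t!1)) * h (\<gamma> (SV (SV (t!2)))))"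
    apply (rule V.CULr[where i=1 and n=2 and m=3])
        apply simp
       apply simp
      apply (unfold V.ml_def)
      apply (auto simp: length_Suc_conv eval_nat_numeral less_Suc_eq)
           apply (auto simp: lin_fun_def msimps hs)
    done
  also have "\<dots> = V.SW 1 x (\<lambda>t. th (t!0) * h (\<gamma> (SV (SV (t!1)))))"
    apply (rule V.GCr[where i=0 and n=1 and m=2, symmetric])
       apply simp
      apply simp
     apply (unfold V.ml_def)
     apply (auto simp: length_Suc_conv eval_nat_numeral less_Suc_eq)
       apply (auto simp: lin_fun_def msimps hs th_def V.s2_multc[symmetric])
    done
  also have "\<dots> = V.s2 x (\<lambda>a b. th a * h (\<gamma> (SV (SV b))))"
    by (simp add: V.SW_1 V.SW_Suc V.SW_0)
  finally show ?thesis .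
qed


lemma D_id:
  assumes h: "lin_fun smU h"
  shows "V.s2 x (\<lambda>a b. h (\<gamma> (SV (SV a))) * up b) = V.s2 x (\<lambda>a b. up a * h (\<gamma> b))"
proof -
  note hs = lin_funD1[OF h] lin_funD2[OF h]
  have "V.s2 x (\<lambda>a b. h (\<gamma> (SV (SV a))) * up b) = V.SW 1 x (\<lambda>t. h (\<gamma> (SV (SV (t!0)))) * up (t!1))"
    by (simp add: V.SW_1 V.SW_Suc V.SW_0)
  also have "\<dots> = V.SW 2 x (\<lambda>t. h (\<gamma> (SV (SV (t!0)))) * p (\<gamma> (t!2)) (SV (t!1)))"
    apply (rule V.GCr[where i=1 and n=1 and m=2])
       apply simp
      apply simp
     apply (unfold V.ml_def)
     apply (auto simp: length_Suc_conv eval_nat_numeral less_Suc_eq)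
       apply (auto simp: lin_fun_def msimps hs up_def)
    done
  also have "\<dots> = V.SW 3 x (\<lambda>t. \<epsilon>V (t!2) * (h (\<gamma> (SV (SV (t!0)))) * p (\<gamma> (t!3)) (SV (t!1))))"
    apply (rule V.CULr[where i=2 and n=2 and m=3, symmetric])
        apply simp
       apply simp
      apply (unfold V.ml_def)
      apply (auto simp: length_Suc_conv eval_nat_numeral less_Suc_eq)
           apply (auto simp: lin_fun_def msimps hs)
    done
  also have "\<dots> = V.SW 4 x (\<lambda>t. h (\<gamma> (SV (t!2)) * \<gamma> (t!3) * \<gamma> (SV (SV (t!0)))) * p (\<gamma> (t!4)) (SV (t!1)))"
    apply (rule V.APLr[where i=2 and n=3 and m=4 and K="\<lambda>l. h (\<gamma> (l!2) * \<gamma> (SV (SV (l!0)))) * p (\<gamma> (l!3)) (SV (l!1))", symmetric])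
         apply simp
        apply simp
       apply (unfold V.ml_def)
       apply (auto simp: length_Suc_conv eval_nat_numeral less_Suc_eq)
                 apply (auto simp: lin_fun_def msimps hs g_mult g_one)
    done
  also have "\<dots> = V.SW 3 x (\<lambda>t. V.s2 (t!3) (\<lambda>a b. h (\<gamma> (SV (t!2)) * \<gamma> a * \<gamma> (SV (SV (t!0)))) * p (\<gamma> b) (SV (t!1))))"
    apply (rule V.GCr[where i=3 and n=3 and m=4, symmetric])
       apply simp
      apply simp
     apply (unfold V.ml_def)
     apply (auto simp: length_Suc_conv eval_nat_numeral less_Suc_eq)
              apply (auto simp: lin_fun_def msimps hs)
    done
  also have "\<dots> = V.SW 2 x (\<lambda>t. V.s2 (t!1) (\<lambda>c d. V.s2 (t!2) (\<lambda>a b. h (\<gamma> (SV d) * \<gamma> a * \<gamma> (SV (SV (t!0)))) * p (\<gamma> b) (SV c))))"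
    apply (rule V.GCr[where i=1 and n=2 and m=3, symmetric])
       apply simp
      apply simp
     apply (unfold V.ml_def)
     apply (auto simp: length_Suc_conv eval_nat_numeral less_Suc_eq V.ml_def intro!: V.s2_linF V.s2_linA)
              apply (auto simp: lin_fun_def msimps hs)
    done
  also have "\<dots> = V.SW 2 x (\<lambda>t. V.s2 (SV (t!1)) (\<lambda>y1 y2. V.s2 (t!2) (\<lambda>z1 z2. h ((\<gamma> y1 * \<gamma> z1) * \<gamma> (SV (SV (t!0)))) * p (\<gamma> z2) y2)))"
  proof (rule V.SW_cong)
    fix t :: "'v list"
    have b: "bil smV (\<lambda>y1 y2. V.s2 (t!2) (\<lambda>z1 z2. h ((\<gamma> y1 * \<gamma> z1) * \<gamma> (SV (SV (t!0)))) * p (\<gamma> z2) y2))"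
      unfolding bil_def by (auto intro!: V.s2_linF simp: lin_fun_def msimps hs)
    show "V.s2 (t!1) (\<lambda>c d. V.s2 (t!2) (\<lambda>a b. h (\<gamma> (SV d) * \<gamma> a * \<gamma> (SV (SV (t!0)))) * p (\<gamma> b) (SV c))) =
        V.s2 (SV (t!1)) (\<lambda>y1 y2. V.s2 (t!2) (\<lambda>z1 z2. h ((\<gamma> y1 * \<gamma> z1) * \<gamma> (SV (SV (t!0)))) * p (\<gamma> z2) y2))"
      by (simp add: V.DS[OF b])
  qed
  also have "\<dots> = V.SW 2 x (\<lambda>t. V.s2 (SV (t!1)) (\<lambda>y1 y2. V.s2 (t!2) (\<lambda>z1 z2. p (\<gamma> z1) y1 * h ((\<gamma> z2 * \<gamma> y2) * \<gamma> (SV (SV (t!0)))))))"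
  proof (rule V.SW_cong)
    fix t :: "'v list"
    have h': "lin_fun smU (\<lambda>u. h (u * \<gamma> (SV (SV (t!0)))))" by (simp add: lin_fun_def msimps hs)
    show "V.s2 (SV (t!1)) (\<lambda>y1 y2. V.s2 (t!2) (\<lambda>z1 z2. h ((\<gamma> y1 * \<gamma> z1) * \<gamma> (SV (SV (t!0)))) * p (\<gamma> z2) y2)) =
       V.s2 (SV (t!1)) (\<lambda>y1 y2. V.s2 (t!2) (\<lambda>z1 z2. p (\<gamma> z1) y1 * h ((\<gamma> z2 * \<gamma> y2) * \<gamma> (SV (SV (t!0))))))"
      by (rule SS[OF h'])
  qed
  also have "\<dots> = V.SW 2 x (\<lambda>t. V.s2 (t!1) (\<lambda>c d. V.s2 (t!2) (\<lambda>a b. p (\<gamma> a) (SV d) * h ((\<gamma> b * \<gamma> (SV c)) * \<gamma> (SV (SV (t!0)))))))"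
  proof (rule V.SW_cong)
    fix t :: "'v list"
    have b: "bil smV (\<lambda>y1 y2. V.s2 (t!2) (\<lambda>z1 z2. p (\<gamma> z1) y1 * h ((\<gamma> z2 * \<gamma> y2) * \<gamma> (SV (SV (t!0))))))"
      unfolding bil_def by (auto intro!: V.s2_linF simp: lin_fun_def msimps hs)
    show "V.s2 (SV (t!1)) (\<lambda>y1 y2. V.s2 (t!2) (\<lambda>z1 z2. p (\<gamma> z1) y1 * h ((\<gamma> z2 * \<gamma> y2) * \<gamma> (SV (SV (t!0)))))) =
       V.s2 (t!1) (\<lambda>c d. V.s2 (t!2) (\<lambda>a b. p (\<gamma> a) (SV d) * h ((\<gamma> b * \<gamma> (SV c)) * \<gamma> (SV (SV (t!0))))))"
      by (simp add: V.DS[OF b])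
  qed
  also have "\<dots> = V.SW 3 x (\<lambda>t. V.s2 (t!3) (\<lambda>a b. p (\<gamma> a) (SV (t!2)) * h ((\<gamma> b * \<gamma> (SV (t!1))) * \<gamma> (SV (SV (t!0))))))"
    apply (rule V.GCr[where i=1 and n=2 and m=3])
       apply simp
      apply simp
     apply (unfold V.ml_def)
     apply (auto simp: length_Suc_conv eval_nat_numeral less_Suc_eq V.ml_def intro!: V.s2_linF V.s2_linA)
              apply (auto simp: lin_fun_def msimps hs)
    done
  also have "\<dots> = V.SW 4 x (\<lambda>t. p (\<gamma> (t!3)) (SV (t!2)) * h ((\<gamma> (t!4) * \<gamma> (SV (t!1))) * \<gamma> (SV (SV (t!0)))))"
    apply (rule V.GCr[where i=3 and n=3 and m=4])
       apply simp
      apply simp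
     apply (unfold V.ml_def)
     apply (auto simp: length_Suc_conv eval_nat_numeral less_Suc_eq)
              apply (auto simp: lin_fun_def msimps hs)
    done
  also have "\<dots> = V.SW 3 x (\<lambda>t. \<epsilon>V (t!0) * (p (\<gamma> (t!2)) (SV (t!1)) * h (\<gamma> (t!3))))"
    apply (rule V.APLr[where i=0 and n=3 and m=4 and K="\<lambda>l. p (\<gamma> (l!2)) (SV (l!1)) * h (\<gamma> (l!3) * \<gamma> (SV (l!0)))"])
         apply simp
        apply simp
       apply (unfold V.ml_def)
       apply (auto simp: length_Suc_conv eval_nat_numeral less_Suc_eq)
                 apply (auto simp: lin_fun_def msimps hs g_mult g_one V.S_mult V.S_one)
    done
  also have "\<dots> = V.SW 2 x (\<lambda>t. p (\<gamma> (t!1)) (SV (t!0)) * h (\<gamma> (t!2)))"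
    apply (rule V.CULr[where i=0 and n=2 and m=3])
        apply simp
       apply simp
      apply (unfold V.ml_def)
      apply (auto simp: length_Suc_conv eval_nat_numeral less_Suc_eq)
           apply (auto simp: lin_fun_def msimps hs)
    done
  also have "\<dots> = V.SW 1 x (\<lambda>t. up (t!0) * h (\<gamma> (t!1)))"
    apply (rule V.GCr[where i=0 and n=1 and m=2, symmetric])
       apply simp
      apply simp
     apply (unfold V.ml_def)
     apply (auto simp: length_Suc_conv eval_nat_numeral less_Suc_eq)
       apply (auto simp: lin_fun_def msimps hs up_def V.s2_multc[symmetric])
    done
  also have "\<dots> = V.s2 x (\<lambda>a b. up a * h (\<gamma> b))"
    by (simp add: V.SW_1 V.SW_Suc V.SW_0)
  finally show ?thesis .
qed

end



context main begin

lemma pg_mult2: "p (\<gamma> z) (u * v) = V.s2 z (\<lambda>a b. p (\<gamma> b) u * p (\<gamma> a) v)"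
proof -
  have b: "bil smU (\<lambda>m1 m2. p m1 u * p m2 v)" unfolding bil_def by (simp add: lin_fun_def msimps)
  show ?thesis by (simp add: p_mult2 g_cop[OF b])
qed

lemma A_id: "V.s2 x (\<lambda>a b. th a * thi b) = \<epsilon>V x"
proof -
  have "V.s2 x (\<lambda>a b. th a * thi b) = V.SW 1 x (\<lambda>t. th (t!0) * thi (t!1))"
    by (simp add: V.SW_1 V.SW_Suc V.SW_0)
  also have "\<dots> = V.SW 2 x (\<lambda>t. th (t!0) * p (\<gamma> (SV (SV (t!1)))) (t!2))"
    apply (rule V.GCr[where i=1 and n=1 and m=2])
       apply simp
      apply simp
     apply (unfold V.ml_def)
     apply (auto simp: length_Suc_conv eval_nat_numeral less_Suc_eq)
       apply (auto simp: lin_fun_def msimps tsimps thi_def)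
    done
  also have "\<dots> = V.SW 1 x (\<lambda>t. V.s2 (t!0) (\<lambda>a b. th a * p (\<gamma> (SV (SV b))) (t!1)))"
    apply (rule V.GCr[where i=0 and n=1 and m=2, symmetric])
       apply simp
      apply simp
     apply (unfold V.ml_def)
     apply (auto simp: length_Suc_conv eval_nat_numeral less_Suc_eq)
       apply (auto simp: lin_fun_def msimps tsimps)
    done
  also have "\<dots> = V.SW 1 x (\<lambda>t. V.s2 (t!0) (\<lambda>a b. p (\<gamma> a) (t!1) * th b))"
    by (rule V.SW_cong) (rule C_id[OF p_lin1, symmetric])
  also have "\<dots> = V.SW 2 x (\<lambda>t. p (\<gamma> (t!0)) (t!2) * th (t!1))"
    apply (rule V.GCr[where i=0 and n=1 and m=2])
       apply simp
      apply simp
     apply (unfold V.ml_def)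
     apply (auto simp: length_Suc_conv eval_nat_numeral less_Suc_eq)
       apply (auto simp: lin_fun_def msimps tsimps)
    done
  also have "\<dots> = V.SW 3 x (\<lambda>t. p (\<gamma> (t!0)) (t!3) * p (\<gamma> (t!1)) (SV (t!2)))"
    apply (rule V.GCr[where i=1 and n=2 and m=3])
       apply simp
      apply simp
     apply (unfold V.ml_def)
     apply (auto simp: length_Suc_conv eval_nat_numeral less_Suc_eq)
         apply (auto simp: lin_fun_def msimps tsimps th_def)
    done
  also have "\<dots> = V.SW 2 x (\<lambda>t. p (\<gamma> (t!0)) (SV (t!1) * t!2))"
    apply (rule V.GCr[where i=0 and n=2 and m=3, symmetric])
       apply simp
      apply simp
     apply (unfold V.ml_def)
     apply (auto simp: length_Suc_conv eval_nat_numeral less_Suc_eq)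
         apply (auto simp: lin_fun_def msimps pg_mult2 mult.commute)
    done
  also have "\<dots> = V.SW 1 x (\<lambda>t. \<epsilon>V (t!1) * p (\<gamma> (t!0)) 1)"
    apply (rule V.APLr[where i=1 and n=1 and m=2 and K="\<lambda>l. p (\<gamma> (l!0)) (l!1)"])
         apply simp
        apply simp
       apply (unfold V.ml_def)
       apply (auto simp: length_Suc_conv eval_nat_numeral less_Suc_eq)
           apply (auto simp: lin_fun_def msimps)
    done
  also have "\<dots> = V.SW 0 x (\<lambda>l. p (\<gamma> (l!0)) 1)"
    apply (rule V.CURr[where i=0 and n=0 and m=1])
        apply simp
       apply simp
      apply (unfold V.ml_def)
      apply (auto simp: length_Suc_conv eval_nat_numeral less_Suc_eq mult.commute)
        apply (auto simp: lin_fun_def msimps)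
    done
  also have "\<dots> = \<epsilon>V x" by (simp add: V.SW_0 p_one2 g_eps)
  finally show ?thesis .
qed

lemma A'_id: "V.s2 x (\<lambda>a b. upi a * up b) = \<epsilon>V x"
proof -
  have "V.s2 x (\<lambda>a b. upi a * up b) = V.SW 1 x (\<lambda>t. upi (t!0) * up (t!1))"
    by (simp add: V.SW_1 V.SW_Suc V.SW_0)
  also have "\<dots> = V.SW 2 x (\<lambda>t. p (\<gamma> (SV (SV (t!1)))) (t!0) * up (t!2))"
    apply (rule V.GCr[where i=0 and n=1 and m=2])
       apply simp
      apply simp
     apply (unfold V.ml_def)
     apply (auto simp: length_Suc_conv eval_nat_numeral less_Suc_eq)
       apply (auto simp: lin_fun_def msimps tsimps upi_def V.s2_multc[symmetric])
    done
  also have "\<dots> = V.SW 1 x (\<lambda>t. V.s2 (t!1) (\<lambda>a b. p (\<gamma> (SV (SV a))) (t!0) * up b))"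
    apply (rule V.GCr[where i=1 and n=1 and m=2, symmetric])
       apply simp
      apply simp
     apply (unfold V.ml_def)
     apply (auto simp: length_Suc_conv eval_nat_numeral less_Suc_eq)
       apply (auto simp: lin_fun_def msimps tsimps)
    done
  also have "\<dots> = V.SW 1 x (\<lambda>t. V.s2 (t!1) (\<lambda>a b. up a * p (\<gamma> b) (t!0)))"
    by (rule V.SW_cong) (rule D_id[OF p_lin1])
  also have "\<dots> = V.SW 2 x (\<lambda>t. up (t!1) * p (\<gamma> (t!2)) (t!0))"
    apply (rule V.GCr[where i=1 and n=1 and m=2])
       apply simp
      apply simp
     apply (unfold V.ml_def)
     apply (auto simp: length_Suc_conv eval_nat_numeral less_Suc_eq)
       apply (auto simp: lin_fun_def msimps tsimps)
    done
  also have "\<dots> = V.SW 3 x (\<lambda>t. p (\<gamma> (t!2)) (SV (t!1)) * p (\<gamma> (t!3)) (t!0))"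
    apply (rule V.GCr[where i=1 and n=2 and m=3])
       apply simp
      apply simp
     apply (unfold V.ml_def)
     apply (auto simp: length_Suc_conv eval_nat_numeral less_Suc_eq)
         apply (auto simp: lin_fun_def msimps tsimps up_def V.s2_multc[symmetric])
    done
  also have "\<dots> = V.SW 2 x (\<lambda>t. p (\<gamma> (t!2)) (t!0 * SV (t!1)))"
    apply (rule V.GCr[where i=2 and n=2 and m=3, symmetric])
       apply simp
      apply simp
     apply (unfold V.ml_def)
     apply (auto simp: length_Suc_conv eval_nat_numeral less_Suc_eq)
         apply (auto simp: lin_fun_def msimps pg_mult2 mult.commute)
    done
  also have "\<dots> = V.SW 1 x (\<lambda>t. \<epsilon>V (t!0) * p (\<gamma> (t!1)) 1)"
    apply (rule V.APRr[where i=0 and n=1 and m=2 and K="\<lambda>l. p (\<gamma> (l!1)) (l!0)"])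
         apply simp
        apply simp
       apply (unfold V.ml_def)
       apply (auto simp: length_Suc_conv eval_nat_numeral less_Suc_eq)
           apply (auto simp: lin_fun_def msimps)
    done
  also have "\<dots> = V.SW 0 x (\<lambda>l. p (\<gamma> (l!0)) 1)"
    apply (rule V.CULr[where i=0 and n=0 and m=1])
        apply simp
       apply simp
      apply (unfold V.ml_def)
      apply (auto simp: length_Suc_conv eval_nat_numeral less_Suc_eq)
        apply (auto simp: lin_fun_def msimps)
    done
  also have "\<dots> = \<epsilon>V x" by (simp add: V.SW_0 p_one2 g_eps)
  finally show ?thesis .
qed

lemma B_id: "V.s2 x (\<lambda>a b. thi a * th b) = \<epsilon>V x"
  using V.conv_one_sided[OF th_lin thi_lin, of x] A_id by (simp add: V.conv_eq)

lemma B'_id: "V.s2 x (\<lambda>a b. up a * upi b) = \<epsilon>V x"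
  using V.conv_one_sided[OF upi_lin up_lin, of x] A'_id by (simp add: V.conv_eq)

end



context main begin

lemma C_final: "\<gamma> (SV (SV x)) = sum_list (map (\<lambda>(a,b,c). smU (thi a * th c) (\<gamma> b)) (delta3 \<Delta>V x))"
proof (rule U.sep[symmetric])
  fix h assume h: "lin_fun smU h"
  note hs = lin_funD1[OF h] lin_funD2[OF h]
  have "h (sum_list (map (\<lambda>(a,b,c). smU (thi a * th c) (\<gamma> b)) (delta3 \<Delta>V x))) =
        sum_list (map (\<lambda>(a,b,c). thi a * th c * h (\<gamma> b)) (delta3 \<Delta>V x))"
    by (simp add: lin_fun_sum_list[OF h] case_prod_unfold hs)
  also have "\<dots> = V.SW 2 x (\<lambda>t. thi (t!0) * th (t!2) * h (\<gamma> (t!1)))"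
    by (rule V.delta3_SW)
  also have "\<dots> = V.SW 1 x (\<lambda>t. thi (t!0) * V.s2 (t!1) (\<lambda>a b. h (\<gamma> a) * th b))"
    apply (rule V.GCr[where i=1 and n=1 and m=2, symmetric])
       apply simp
      apply simp
     apply (unfold V.ml_def)
     apply (auto simp: length_Suc_conv eval_nat_numeral less_Suc_eq)
       apply (auto simp: lin_fun_def msimps tsimps hs V.s2_cmult[symmetric] mult_ac simp del: V.s2_cmult)
    done
  also have "\<dots> = V.SW 1 x (\<lambda>t. thi (t!0) * V.s2 (t!1) (\<lambda>a b. th a * h (\<gamma> (SV (SV b)))))"
    by (simp add: C_id[OF h])
  also have "\<dots> = V.SW 2 x (\<lambda>t. thi (t!0) * th (t!1) * h (\<gamma> (SV (SV (t!2)))))"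
    apply (rule V.GCr[where i=1 and n=1 and m=2])
       apply simp
      apply simp
     apply (unfold V.ml_def)
     apply (auto simp: length_Suc_conv eval_nat_numeral less_Suc_eq)
       apply (auto simp: lin_fun_def msimps tsimps hs V.s2_cmult[symmetric] mult_ac simp del: V.s2_cmult)
    done
  also have "\<dots> = V.SW 1 x (\<lambda>t. V.s2 (t!0) (\<lambda>a b. thi a * th b) * h (\<gamma> (SV (SV (t!1)))))"
    apply (rule V.GCr[where i=0 and n=1 and m=2, symmetric])
       apply simp
      apply simp
     apply (unfold V.ml_def)
     apply (auto simp: length_Suc_conv eval_nat_numeral less_Suc_eq)
       apply (auto simp: lin_fun_def msimps tsimps hs V.s2_multc[symmetric])
    done
  also have "\<dots> = V.SW 1 x (\<lambda>t. \<epsilon>V (t!0) * h (\<gamma> (SV (SV (t!1)))))"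
    by (simp add: B_id)
  also have "\<dots> = V.SW 0 x (\<lambda>l. h (\<gamma> (SV (SV (l!0)))))"
    apply (rule V.CULr[where i=0 and n=0 and m=1])
        apply simp
       apply simp
      apply (unfold V.ml_def)
      apply (auto simp: length_Suc_conv eval_nat_numeral less_Suc_eq)
        apply (auto simp: lin_fun_def msimps hs)
    done
  also have "\<dots> = h (\<gamma> (SV (SV x)))" by (simp add: V.SW_0)
  finally show "h (sum_list (map (\<lambda>(a,b,c). smU (thi a * th c) (\<gamma> b)) (delta3 \<Delta>V x))) = h (\<gamma> (SV (SV x)))" .
qed

lemma C'_final: "\<gamma> (SV (SV x)) = sum_list (map (\<lambda>(a,b,c). smU (up a * upi c) (\<gamma> b)) (delta3 \<Delta>V x))"
proof (rule U.sep[symmetric])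
  fix h assume h: "lin_fun smU h"
  note hs = lin_funD1[OF h] lin_funD2[OF h]
  have "h (sum_list (map (\<lambda>(a,b,c). smU (up a * upi c) (\<gamma> b)) (delta3 \<Delta>V x))) =
        sum_list (map (\<lambda>(a,b,c). up a * upi c * h (\<gamma> b)) (delta3 \<Delta>V x))"
    by (simp add: lin_fun_sum_list[OF h] case_prod_unfold hs)
  also have "\<dots> = V.SW 2 x (\<lambda>t. up (t!0) * upi (t!2) * h (\<gamma> (t!1)))"
    by (rule V.delta3_SW)
  also have "\<dots> = V.SW 1 x (\<lambda>t. V.s2 (t!0) (\<lambda>a b. up a * h (\<gamma> b)) * upi (t!1))"
    apply (rule V.GCr[where i=0 and n=1 and m=2, symmetric])
       apply simp
      apply simp
     apply (unfold V.ml_def)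
     apply (auto simp: length_Suc_conv eval_nat_numeral less_Suc_eq)
       apply (auto simp: lin_fun_def msimps tsimps hs V.s2_multc[symmetric] V.s2_cmult[symmetric] mult_ac simp del: V.s2_cmult)
    done
  also have "\<dots> = V.SW 1 x (\<lambda>t. V.s2 (t!0) (\<lambda>a b. h (\<gamma> (SV (SV a))) * up b) * upi (t!1))"
    by (simp add: D_id[OF h])
  also have "\<dots> = V.SW 2 x (\<lambda>t. h (\<gamma> (SV (SV (t!0)))) * up (t!1) * upi (t!2))"
    apply (rule V.GCr[where i=0 and n=1 and m=2])
       apply simp
      apply simp
     apply (unfold V.ml_def)
     apply (auto simp: length_Suc_conv eval_nat_numeral less_Suc_eq)
       apply (auto simp: lin_fun_def msimps tsimps hs V.s2_multc[symmetric])
    done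
  also have "\<dots> = V.SW 1 x (\<lambda>t. h (\<gamma> (SV (SV (t!0)))) * V.s2 (t!1) (\<lambda>a b. up a * upi b))"
    apply (rule V.GCr[where i=1 and n=1 and m=2, symmetric])
       apply simp
      apply simp
     apply (unfold V.ml_def)
     apply (auto simp: length_Suc_conv eval_nat_numeral less_Suc_eq)
       apply (auto simp: lin_fun_def msimps tsimps hs)
    done
  also have "\<dots> = V.SW 1 x (\<lambda>t. h (\<gamma> (SV (SV (t!0)))) * \<epsilon>V (t!1))"
    by (simp add: B'_id)
  also have "\<dots> = V.SW 0 x (\<lambda>l. h (\<gamma> (SV (SV (l!0)))))"
    apply (rule V.CURr[where i=0 and n=0 and m=1])
        apply simp
       apply simp
      apply (unfold V.ml_def)
      apply (auto simp: length_Suc_conv eval_nat_numeral less_Suc_eq)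
        apply (auto simp: lin_fun_def msimps hs)
    done
  also have "\<dots> = h (\<gamma> (SV (SV x)))" by (simp add: V.SW_0)
  finally show "h (sum_list (map (\<lambda>(a,b,c). smU (up a * upi c) (\<gamma> b)) (delta3 \<Delta>V x))) = h (\<gamma> (SV (SV x)))" .
qed

end

theorem mainTheorem4:
  fixes smU :: "'k::field \<Rightarrow> 'u::ring_1 \<Rightarrow> 'u" and \<Delta>U :: "'u \<Rightarrow> ('u \<times> 'u) list"
    and \<epsilon>U :: "'u \<Rightarrow> 'k" and SU :: "'u \<Rightarrow> 'u"
    and smV :: "'k \<Rightarrow> 'v::ring_1 \<Rightarrow> 'v" and \<Delta>V :: "'v \<Rightarrow> ('v \<times> 'v) list"
    and \<epsilon>V :: "'v \<Rightarrow> 'k" and SV :: "'v \<Rightarrow> 'v"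
    and p :: "'u \<Rightarrow> 'v \<Rightarrow> 'k" and \<gamma> :: "'v \<Rightarrow> 'u"
  assumes U: "hopf_algebra smU \<Delta>U \<epsilon>U SU" and bijU: "bij SU"
    and V: "hopf_algebra smV \<Delta>V \<epsilon>V SV" and bijV: "bij SV"
    and P: "hopf_pairing smU \<Delta>U \<epsilon>U smV \<Delta>V \<epsilon>V p"
    and G: "hopf_map_cop smU \<Delta>U \<epsilon>U smV \<Delta>V \<epsilon>V \<gamma>"
    and comm: "\<And>y m. \<gamma> y * m =
       sum_list (map (\<lambda>(m1, m2, m3). sum_list (map (\<lambda>(y1, y2, y3).
          smU (p (inv SU m1) y3 * p m3 y1) (m2 * \<gamma> y2)) (delta3 \<Delta>V y))) (delta3 \<Delta>U m))"
  shows
    "(let \<theta> = (\<lambda>x. sum_list (map (\<lambda>(a, b). p (\<gamma> a) (SV b)) (\<Delta>V x)));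
          \<theta>i = (\<lambda>x. sum_list (map (\<lambda>(a, b). p (\<gamma> (SV (SV a))) b) (\<Delta>V x)))
      in conv \<Delta>V \<theta> \<theta>i = \<epsilon>V \<and> conv \<Delta>V \<theta>i \<theta> = \<epsilon>V \<and>
         (\<forall>x. \<gamma> (SV (SV x)) =
            sum_list (map (\<lambda>(a, b, c). smU (\<theta>i a * \<theta> c) (\<gamma> b)) (delta3 \<Delta>V x))))
   \<and> (let \<upsilon> = (\<lambda>x. sum_list (map (\<lambda>(a, b). p (\<gamma> b) (SV a)) (\<Delta>V x)));
          \<upsilon>i = (\<lambda>x. sum_list (map (\<lambda>(a, b). p (\<gamma> (SV (SV b))) a) (\<Delta>V x)))
      in conv \<Delta>V \<upsilon> \<upsilon>i = \<epsilon>V \<and> conv \<Delta>V \<upsilon>i \<upsilon> = \<epsilon>V \<and>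
         (\<forall>x. \<gamma> (SV (SV x)) =
            sum_list (map (\<lambda>(a, b, c). smU (\<upsilon> a * \<upsilon>i c) (\<gamma> b)) (delta3 \<Delta>V x))))"
proof -
  interpret M: main smU \<Delta>U \<epsilon>U SU smV \<Delta>V \<epsilon>V SV p \<gamma>
  proof (unfold_locales)
    show "hopf_algebra smU \<Delta>U \<epsilon>U SU" by (rule U)
    show "hopf_algebra smV \<Delta>V \<epsilon>V SV" by (rule V)
    show "bij SU" by (rule bijU)
    show "bij SV" by (rule bijV)
    show "hopf_pairing smU \<Delta>U \<epsilon>U smV \<Delta>V \<epsilon>V p" by (rule P)
    show "hopf_map_cop smU \<Delta>U \<epsilon>U smV \<Delta>V \<epsilon>V \<gamma>" by (rule G)
    show "\<And>y m. \<gamma> y * m =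
       sum_list (map (\<lambda>(m1, m2, m3). sum_list (map (\<lambda>(y1, y2, y3).
          smU (p (inv SU m1) y3 * p m3 y1) (m2 * \<gamma> y2)) (delta3 \<Delta>V y))) (delta3 \<Delta>U m))"
      by (rule comm)
  qed
  have e1: "(\<lambda>x. sum_list (map (\<lambda>(a, b). p (\<gamma> a) (SV b)) (\<Delta>V x))) = M.th"
    by (simp add: M.th_def M.V.s2_def fun_eq_iff)
  have e2: "(\<lambda>x. sum_list (map (\<lambda>(a, b). p (\<gamma> (SV (SV a))) b) (\<Delta>V x))) = M.thi"
    by (simp add: M.thi_def M.V.s2_def fun_eq_iff)
  have e3: "(\<lambda>x. sum_list (map (\<lambda>(a, b). p (\<gamma> b) (SV a)) (\<Delta>V x))) = M.up"
    by (simp add: M.up_def M.V.s2_def fun_eq_iff)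
  have e4: "(\<lambda>x. sum_list (map (\<lambda>(a, b). p (\<gamma> (SV (SV b))) a) (\<Delta>V x))) = M.upi"
    by (simp add: M.upi_def M.V.s2_def fun_eq_iff)
  have c1: "conv \<Delta>V M.th M.thi = \<epsilon>V" using M.A_id by (simp add: M.V.conv_eq fun_eq_iff)
  have c2: "conv \<Delta>V M.thi M.th = \<epsilon>V" using M.B_id by (simp add: M.V.conv_eq fun_eq_iff)
  have c3: "conv \<Delta>V M.up M.upi = \<epsilon>V" using M.B'_id by (simp add: M.V.conv_eq fun_eq_iff)
  have c4: "conv \<Delta>V M.upi M.up = \<epsilon>V" using M.A'_id by (simp add: M.V.conv_eq fun_eq_iff)
  show ?thesis
    unfolding Let_def e1 e2 e3 e4
    using c1 c2 c3 c4 M.C_final M.C'_final by blast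
qed


end
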